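(* Let $c\in\mathbb R$ and assume one of the following: (a) there exists a solution $z\in C^0[0,1]\cap C^1\big((0,1)\setminus\{\alpha\}\big)$ of the first-order problem $\dot z = h-c-\frac{D g}{z}$ in $(0,\alpha)\cup(\alpha,1)$, $z<0$ in $(0,\alpha)$, $z>0$ in $(\alpha,1)$, $z(0)=z(\alpha)=z(1)=0$, and either (i) $\alpha\neq\gamma$, or (ii) $\alpha=\gamma$ and there exist $L>0$ and $\tau\in(0,1)$ such that $|g(\phi)|\ge L|\phi-\gamma|^\tau$ in a full neighborhood of $\gamma$; (b) $\alpha<\gamma$, there exist $L>0$ and $\tau\in(0,1)$ such that $|g(\phi)|\ge L|\phi-\gamma|^\tau$ in a full neighborhood of $\gamma$, and there exists a solution $z\in C^0[0,1]\cap C^1\big((0,1)\setminus\{\alpha,\gamma\}\big)$ of $\dot z = h-c-\frac{D g}{z}$ in $(0,\alpha)\cup(\alpha,\gamma)\cup(\gamma,1)$, $z<0$ in $(0,\alpha)$, $z>0$ in $(\alpha,\gamma)\cup(\gamma,1)$, $z(0)=z(\alpha)=z(1)=0$, with moreover $z(\gamma)=0$. Then the equation $\rho_t+f(\rho)_x=(D(\rho)\rho_x)_x+g(\rho)$ admits a wavefront with speed $c$ whose profile $\phi$ satisfies $\phi(-\infty)=1$ and $\phi(+\infty)=0$.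
   Context: We consider $\rho_t+f(\rho)_x=(D(\rho)\rho_x)_x+g(\rho)$, $t\ge0$, $x\in\mathbb R$, with $h:=\dot f$. Assumptions: $f\in C^1[0,1]$, $f(0)=0$; $D\in C^1[0,1]$ with $D>0$ in $(0,\alpha)$ and $D<0$ in $(\alpha,1)$ for some $\alpha\in(0,1)$; $g\in C^0[0,1]$ with $g<0$ in $(0,\gamma)$, $g>0$ in $(\gamma,1)$, $g(0)=g(\gamma)=g(1)=0$ for some $\gamma\in(0,1)$. A traveling wave $\rho(x,t)=\phi(x-ct)$ has profile satisfying (in a weak sense) $(D(\phi)\phi')'+(c-h(\phi))\phi'+g(\phi)=0$; a wavefront is a traveling wave defined on all of $\mathbb R$ with monotone non-constant profile connecting the equilibria. *)

theory Defs
  imports "HOL-Analysis.Analysis"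
begin

definition test_fun :: "(real \<Rightarrow> real) \<Rightarrow> bool" where
  "test_fun \<psi> \<longleftrightarrow> (\<forall>n x. ((deriv ^^ n) \<psi>) differentiable (at x)) \<and> bounded {x. \<psi> x \<noteq> 0}"

definition loc_int :: "(real \<Rightarrow> real) \<Rightarrow> bool" where
  "loc_int u \<longleftrightarrow> (\<forall>a b. set_integrable lborel {a..b} u)"

definition tw_profile ::
  "(real \<Rightarrow> real) \<Rightarrow> (real \<Rightarrow> real) \<Rightarrow> (real \<Rightarrow> real) \<Rightarrow> real \<Rightarrow> (real \<Rightarrow> real) \<Rightarrow> bool" where
  "tw_profile D f g c \<phi> \<longleftrightarrow>
     continuous_on UNIV \<phi> \<and> (\<forall>\<xi>. \<phi> \<xi> \<in> {0..1}) \<and>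
     (\<exists>dphi. loc_int dphi \<and>
        (\<forall>\<psi>. test_fun \<psi> \<longrightarrow>
            (LINT \<xi>|lborel. \<phi> \<xi> * deriv \<psi> \<xi>) = - (LINT \<xi>|lborel. dphi \<xi> * \<psi> \<xi>)) \<and>
        loc_int (\<lambda>\<xi>. D (\<phi> \<xi>) * dphi \<xi>) \<and>
        (\<forall>\<psi>. test_fun \<psi> \<longrightarrow>
            (LINT \<xi>|lborel. (D (\<phi> \<xi>) * dphi \<xi> - f (\<phi> \<xi>) + c * \<phi> \<xi>) * deriv \<psi> \<xi>
                             - g (\<phi> \<xi>) * \<psi> \<xi>) = 0))"

definition wavefront ::
  "(real \<Rightarrow> real) \<Rightarrow> (real \<Rightarrow> real) \<Rightarrow> (real \<Rightarrow> real) \<Rightarrow> real \<Rightarrow> (real \<Rightarrow> real) \<Rightarrow> bool" where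
  "wavefront D f g c \<phi> \<longleftrightarrow> tw_profile D f g c \<phi> \<and> (mono \<phi> \<or> antimono \<phi>) \<and> (\<exists>x y. \<phi> x \<noteq> \<phi> y)"

definition holder_below :: "(real \<Rightarrow> real) \<Rightarrow> real \<Rightarrow> bool" where
  "holder_below g \<gamma> \<longleftrightarrow> (\<exists>L \<tau> \<delta>. L > 0 \<and> 0 < \<tau> \<and> \<tau> < 1 \<and> \<delta> > 0 \<and>
      (\<forall>u\<in>{0..1}. \<bar>u - \<gamma>\<bar> < \<delta> \<longrightarrow> \<bar>g u\<bar> \<ge> L * \<bar>u - \<gamma>\<bar> powr \<tau>))"

end

theory Submission
  imports Defs
begin

lemma prop_down:
  fixes F F' :: "real \<Rightarrow> real"
  assumes ab: "a \<le> b" and cont: "continuous_on {a..b} F"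
    and der: "\<And>x. x \<in> {a<..b} \<Longrightarrow> F x > T \<Longrightarrow> (F has_real_derivative F' x) (at x) \<and> F' x < 0"
    and Fb: "F b > T"
  shows "\<forall>x\<in>{a..b}. F x \<ge> F b"
proof (rule ccontr)
  assume "\<not> ?thesis"
  then obtain x1 where x1: "x1 \<in> {a..b}" "F x1 < F b" by force
  define v where "v = (max (F x1) T + F b)/2"
  have v: "v > T" "v > F x1" "v < F b" using Fb x1 unfolding v_def by auto
  define A where "A = {x1..b} \<inter> F -` {v..}"
  have sub: "{x1..b} \<subseteq> {a..b}" using x1 by auto
  have contA: "continuous_on {x1..b} F" using continuous_on_subset[OF cont sub] .
  have clA: "closed A" unfolding A_def
    by (rule continuous_closed_preimage[OF contA]) auto
  have bA: "b \<in> A" using v x1 unfolding A_def by auto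
  have bdd: "bdd_below A" unfolding A_def by (auto intro: bdd_belowI[where m=x1])
  define y where "y = Inf A"
  have yA: "y \<in> A" unfolding y_def using closed_contains_Inf[OF _ bdd clA] bA by blast
  have yle: "\<And>x. x \<in> A \<Longrightarrow> y \<le> x" unfolding y_def using bdd by (simp add: cInf_lower)
  have y1: "x1 \<le> y" "y \<le> b" "F y \<ge> v" using yA unfolding A_def by auto
  have yne: "y \<noteq> x1" using y1 v by auto
  have Fy: "F y = v"
  proof (rule ccontr)
    assume "F y \<noteq> v"
    then have "F y > v" using y1 by auto
    have "continuous_on {x1..y} F" using continuous_on_subset[OF contA] y1 by auto
    then obtain x where x: "x1 \<le> x" "x \<le> y" "F x = v"
      using IVT'[of F x1 v y] v \<open>F y > v\<close> y1 by auto
    then have "x \<in> A" using y1 unfolding A_def by auto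
    then have "y \<le> x" by (rule yle)
    then show False using x \<open>F y > v\<close> by auto
  qed
  have yin: "y \<in> {a<..b}" using y1 yne x1 by auto
  from der[OF yin] Fy v have d: "(F has_real_derivative F' y) (at y)" "F' y < 0" by auto
  from DERIV_neg_dec_left[OF d] obtain d where d0: "d > 0" and dd: "\<And>h. h > 0 \<Longrightarrow> h < d \<Longrightarrow> F y < F (y - h)" by blast
  define hh where "hh = min (d/2) (y - x1)"
  have hh: "hh > 0" "hh < d" "hh \<le> y - x1" using d0 yne y1 unfolding hh_def by auto
  have "F (y - hh) > v" using dd[OF hh(1,2)] Fy by simp
  then have "y - hh \<in> A" using hh y1 unfolding A_def by auto
  then have "y \<le> y - hh" by (rule yle)
  then show False using hh by simp
qed

lemma prop_up:
  fixes F F' :: "real \<Rightarrow> real"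
  assumes ab: "a \<le> b" and cont: "continuous_on {a..b} F"
    and der: "\<And>x. x \<in> {a..<b} \<Longrightarrow> F x < T \<Longrightarrow> (F has_real_derivative F' x) (at x) \<and> F' x < 0"
    and Fa: "F a < T"
  shows "\<forall>x\<in>{a..b}. F x \<le> F a"
proof -
  define G where "G = (\<lambda>x. - F (- x))"
  have c1: "continuous_on {-b..-a} (\<lambda>x. - x)" by (intro continuous_intros)
  have "continuous_on {-b..-a} G" unfolding G_def
    apply (intro continuous_intros continuous_on_compose2[OF cont])
    by auto
  moreover have "(G has_real_derivative F' (- x)) (at x) \<and> F' (-x) < 0"
    if "x \<in> {-b<..-a}" "G x > - T" for x
  proof -
    have "- x \<in> {a..<b}" "F (- x) < T" using that unfolding G_def by auto
    from der[OF this] have "(F has_real_derivative F' (- x)) (at (- x))" "F' (- x) < 0" by auto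
    then have "((\<lambda>x. F (- x)) has_real_derivative - F' (- x)) (at x)"
      using DERIV_mirror[where f=F and x=x and y="F' (- x)"] by simp
    then have "(G has_real_derivative F' (- x)) (at x)" unfolding G_def
      using DERIV_minus by fastforce
    then show ?thesis using \<open>F' (- x) < 0\<close> by auto
  qed
  moreover have "G (- a) > - T" using Fa unfolding G_def by simp
  ultimately have "\<forall>x\<in>{-b..-a}. G x \<ge> G (- a)"
    using prop_down[of "-b" "-a" G "- T" "\<lambda>x. F' (- x)"] ab by auto
  then show ?thesis unfolding G_def
    by (metis atLeastAtMost_iff minus_minus neg_le_iff_le)
qed

lemma cont_bound:
  fixes F :: "real \<Rightarrow> real"
  assumes "continuous_on {a..b} F"
  shows "\<exists>B>0. \<forall>x\<in>{a..b}. \<bar>F x\<bar> \<le> B"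
proof -
  have "compact (F ` {a..b})" by (rule compact_continuous_image[OF assms compact_Icc])
  then have "bounded (F ` {a..b})" by (rule compact_imp_bounded)
  then obtain B where "B > 0" "\<forall>y\<in>F ` {a..b}. norm y \<le> B" using bounded_pos by blast
  then show ?thesis by auto
qed

lemma local_less:
  fixes F :: "real \<Rightarrow> real" and x0 v :: real
  assumes "isCont F x0" "F x0 < v"
  shows "\<exists>e>0. \<forall>x. \<bar>x - x0\<bar> < e \<longrightarrow> F x < v"
proof -
  have "\<forall>\<^sub>F x in at x0. F x < v" using order_tendstoD(2)[OF assms(1)[unfolded isCont_def] assms(2)] .
  then obtain e where e: "e > 0" "\<And>x. x \<noteq> x0 \<Longrightarrow> dist x x0 < e \<Longrightarrow> F x < v"
    unfolding eventually_at by auto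
  show ?thesis
  proof (intro exI[of _ e] conjI allI impI)
    fix x assume "\<bar>x - x0\<bar> < e"
    then show "F x < v" using e assms(2) by (cases "x = x0") (auto simp: dist_real_def)
  qed (use e in auto)
qed

lemma local_greater:
  fixes F :: "real \<Rightarrow> real"
  assumes "isCont F x0" "F x0 > v"
  shows "\<exists>e>0. \<forall>x. \<bar>x - x0\<bar> < e \<longrightarrow> F x > v"
proof -
  have "isCont (\<lambda>x. - F x) x0" using assms(1) by (intro continuous_intros)
  from local_less[OF this, of "- v"] assms(2) show ?thesis by auto
qed

lemma pow_int_right:
  fixes q \<delta> e :: real
  assumes "q < 1" "\<delta> \<ge> 0"
  shows "(\<lambda>x. (x - e) powr (-q)) integrable_on {e..e+\<delta>}"
proof -
  have "(\<lambda>x. x powr (-q)) integrable_on {0..\<delta>}"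
    by (rule integrable_on_powr_from_0) (use assms in auto)
  from integrable_shift_real_ivl[OF this, of "- e"] show ?thesis by (simp add: add.commute)
qed

lemma pow_int_left:
  fixes q \<delta> e :: real
  assumes "q < 1" "\<delta> \<ge> 0"
  shows "(\<lambda>x. (e - x) powr (-q)) integrable_on {e-\<delta>..e}"
proof -
  have "(\<lambda>x. x powr (-q)) integrable_on {0..\<delta>}"
    by (rule integrable_on_powr_from_0) (use assms in auto)
  then have "(\<lambda>x. (- x) powr (-q)) integrable_on {-\<delta>..-0}"
    using Henstock_Kurzweil_Integration.integrable_reflect_real[where f="\<lambda>x. x powr (-q)" and b=\<delta> and a=0] by simp
  from integrable_shift_real_ivl[OF this, of "- e"] show ?thesis by simp
qed

lemma dominate:
  fixes k G :: "real \<Rightarrow> real"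
  assumes "continuous_on {a<..<b} k" "\<And>x. x\<in>{a<..<b} \<Longrightarrow> \<bar>k x\<bar> \<le> G x"
    "G integrable_on {a..b}"
  shows "k integrable_on {a..b}"
proof -
  have "k integrable_on {a<..<b}"
  proof (rule measurable_bounded_by_integrable_imp_integrable)
    show "k \<in> borel_measurable (lebesgue_on {a<..<b})"
      by (rule continuous_imp_measurable_on_sets_lebesgue[OF assms(1)]) auto
    show "G integrable_on {a<..<b}" using assms(3) integrable_on_Icc_iff_Ioo by blast
  qed (use assms(2) in auto)
  then show ?thesis using integrable_on_Icc_iff_Ioo by blast
qed

lemma S1:
  fixes z z' h D g :: "real \<Rightarrow> real" and c gmin a b :: real
  assumes ab: "a \<le> b" and zc: "continuous_on {a..b} z"
    and zd: "\<And>x. x \<in> {a<..<b} \<Longrightarrow> (z has_real_derivative z' x) (at x)"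
    and ode: "\<And>x. x \<in> {a<..<b} \<Longrightarrow> z' x = h x - c - D x * g x / z x"
    and znz: "\<And>x. x \<in> {a<..<b} \<Longrightarrow> z x \<noteq> 0"
    and hc: "continuous_on {a..b} h" and Dc: "continuous_on {a..b} D"
    and gmin: "gmin > 0" and gb: "(\<forall>x\<in>{a..b}. g x \<ge> gmin) \<or> (\<forall>x\<in>{a..b}. g x \<le> - gmin)"
    and sgn: "\<And>x. x \<in> {a<..<b} \<Longrightarrow> D x / z x \<le> 0"
  shows "(\<lambda>x. D x / z x) integrable_on {a..b}"
proof -
  have "(z' has_integral (z b - z a)) {a..b}"
    by (rule fundamental_theorem_of_calculus_interior[OF ab zc])
       (use zd in \<open>auto simp: has_real_derivative_iff_has_vector_derivative[symmetric]\<close>)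
  then have z'i: "z' integrable_on {a..b}" by blast
  have hi: "h integrable_on {a..b}" using hc by (rule integrable_continuous_interval)
  have kc: "continuous_on {a<..<b} (\<lambda>x. D x / z x)"
    using znz by (intro continuous_intros continuous_on_subset[OF zc] continuous_on_subset[OF Dc]) auto
  have eq: "z' x - h x + c = (- (D x / z x)) * g x" if "x \<in> {a<..<b}" for x
    using ode[OF that] znz[OF that] by (simp add: field_simps)
  from gb show ?thesis
  proof
    assume gp: "\<forall>x\<in>{a..b}. g x \<ge> gmin"
    show ?thesis
    proof (rule dominate[where G="\<lambda>x. (z' x - h x + c) / gmin"])
      show "(\<lambda>x. (z' x - h x + c) / gmin) integrable_on {a..b}"
        by (intro integrable_on_divide integrable_add integrable_diff z'i hi integrable_const_ivl)
      fix x assume x: "x \<in> {a<..<b}"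
      have k0: "- (D x / z x) \<ge> 0" using sgn[OF x] by simp
      have "(- (D x / z x)) * gmin \<le> (- (D x / z x)) * g x"
        using gp x by (intro mult_left_mono k0) auto
      then have "- (D x / z x) \<le> ((- (D x / z x)) * g x) / gmin"
        by (subst pos_le_divide_eq[OF gmin])
      then have "- (D x / z x) \<le> (z' x - h x + c) / gmin" using eq[OF x] by simp
      then show "\<bar>D x / z x\<bar> \<le> (z' x - h x + c) / gmin" using k0 by simp
    qed (rule kc)
  next
    assume gn: "\<forall>x\<in>{a..b}. g x \<le> - gmin"
    show ?thesis
    proof (rule dominate[where G="\<lambda>x. (h x - z' x - c) / gmin"])
      show "(\<lambda>x. (h x - z' x - c) / gmin) integrable_on {a..b}"
        by (intro integrable_on_divide integrable_add integrable_diff z'i hi integrable_const_ivl)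
      fix x assume x: "x \<in> {a<..<b}"
      have k0: "- (D x / z x) \<ge> 0" using sgn[OF x] by simp
      have "(- (D x / z x)) * gmin \<le> (- (D x / z x)) * (- g x)"
      proof (intro mult_left_mono k0)
        have "g x \<le> - gmin" using gn x by auto
        then show "gmin \<le> - g x" by linarith
      qed
      then have "- (D x / z x) \<le> ((- (D x / z x)) * (- g x)) / gmin"
        by (subst pos_le_divide_eq[OF gmin])
      moreover have "h x - z' x - c = (- (D x / z x)) * (- g x)" using eq[OF x] by simp
      ultimately have "- (D x / z x) \<le> (h x - z' x - c) / gmin" by simp
      then show "\<bar>D x / z x\<bar> \<le> (h x - z' x - c) / gmin" using k0 by simp
    qed (rule kc)
  qed
qed

lemma sq_powr_half: "(0::real) \<le> t \<Longrightarrow> (t powr (a/2))^2 = t powr a"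
  by (simp add: power2_eq_square powr_add[symmetric])

lemma S4:
  fixes z z' h D g :: "real \<Rightarrow> real" and c e \<epsilon> L \<tau> M d0 Dm :: real
  assumes \<epsilon>: "0 < \<epsilon>" "\<epsilon> \<le> 1" and L: "L > 0" and \<tau>: "0 < \<tau>" "\<tau> < 1" and M: "M \<ge> 0"
    and d0: "d0 > 0" and Dm: "Dm \<ge> 0"
    and zc: "continuous_on {e-\<epsilon>..e} z" and ze: "z e = 0"
    and Dc: "continuous_on {e-\<epsilon>..e} D"
    and H: "\<And>x. x \<in> {e-\<epsilon>..<e} \<Longrightarrow> (z has_real_derivative z' x) (at x)
        \<and> z' x = h x - c - D x * g x / z x \<and> z x > 0 \<and> D x \<le> - d0 \<and> \<bar>D x\<bar> \<le> Dm
        \<and> \<bar>h x - c\<bar> \<le> M \<and> - g x \<ge> L * (e - x) powr \<tau>"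
  shows "(\<lambda>x. D x / z x) integrable_on {e-\<epsilon>..e}"
proof -
  define \<beta> where "\<beta> = min 1 (d0*L/(M+2))"
  have dL: "d0 * L > 0" using d0 L by simp
  have \<beta>: "0 < \<beta>" "\<beta> \<le> 1" "\<beta> * (M+1) < d0 * L"
  proof -
    show "0 < \<beta>" "\<beta> \<le> 1" unfolding \<beta>_def using dL M by auto
    have "\<beta> \<le> d0*L/(M+2)" unfolding \<beta>_def by simp
    then have "\<beta> * (M+1) \<le> d0*L/(M+2) * (M+1)" using M by (intro mult_right_mono) auto
    also have "\<dots> < d0 * L" using dL M by (simp add: field_simps)
    finally show "\<beta> * (M+1) < d0 * L" .
  qed
  define q where "q = (1+\<tau>)/2"
  have q: "q < 1" "0 < q" using \<tau> unfolding q_def by auto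
  have lower: "z s \<ge> \<beta> * (e - s) powr q" if s: "s \<in> {e-\<epsilon>..<e}" for s
  proof (rule ccontr)
    assume "\<not> z s \<ge> \<beta> * (e - s) powr q"
    then have zs: "z s < \<beta> * (e - s) powr q" by simp
    define F where "F = (\<lambda>x. (z x)^2 - \<beta>^2 * (e - x) powr (1+\<tau>))"
    define F' where "F' = (\<lambda>x. 2 * z x * z' x + \<beta>^2 * (1+\<tau>) * (e - x) powr \<tau>)"
    have "(z s)^2 < (\<beta> * (e - s) powr q)^2"
      using zs H[OF s] by (intro power_strict_mono) auto
    also have "\<dots> = \<beta>^2 * (e - s) powr (1+\<tau>)"
      using s unfolding q_def by (simp add: power_mult_distrib sq_powr_half)
    finally have Fs: "F s < 0" unfolding F_def by simp
    have ssub: "{s..e} \<subseteq> {e-\<epsilon>..e}" using s by auto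
    have cont: "continuous_on {s..e} F" unfolding F_def
      by (intro continuous_intros continuous_on_subset[OF zc ssub] continuous_on_powr') (use \<tau> in auto)
    have der: "(F has_real_derivative F' x) (at x) \<and> F' x < 0" if x: "x \<in> {s..<e}" "F x < 0" for x
    proof
      have xx: "x \<in> {e-\<epsilon>..<e}" using x s by auto
      note Hx = H[OF xx]
      define t where "t = e - x"
      have t: "0 < t" "t \<le> 1" using xx \<epsilon> unfolding t_def by auto
      have d2: "((\<lambda>x. (e - x) powr (1+\<tau>)) has_real_derivative (1+\<tau>) * (e - x) powr (1 + \<tau> - of_nat 1) * (0 - 1)) (at x)"
        by (rule DERIV_fun_powr[OF DERIV_diff[OF DERIV_const DERIV_ident]]) (use t in \<open>simp add: t_def\<close>)
      have d1: "((\<lambda>x. (z x)^2) has_real_derivative of_nat 2 * (z' x * (z x)^(2 - Suc 0))) (at x)"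
        by (rule DERIV_power) (use Hx in auto)
      have "(F has_real_derivative (of_nat 2 * (z' x * (z x)^(2 - Suc 0)) - \<beta>^2 * ((1+\<tau>) * (e - x) powr (1 + \<tau> - of_nat 1) * (0 - 1)))) (at x)"
        unfolding F_def by (intro DERIV_diff d1 DERIV_cmult d2)
      then show "(F has_real_derivative F' x) (at x)" unfolding F'_def by (simp add: algebra_simps)
      have P: "t powr \<tau> > 0" using t by simp
      have A1: "(z x)^2 < \<beta>^2 * t powr (1+\<tau>)" using x(2) unfolding F_def t_def by simp
      have A2: "t powr (1+\<tau>) \<le> t powr (2*\<tau>)" by (rule powr_mono') (use t \<tau> in auto)
      have A3: "(\<beta> * t powr \<tau>)^2 = \<beta>^2 * t powr (2*\<tau>)"
        using sq_powr_half[of t "2*\<tau>"] t by (simp add: power_mult_distrib)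
      have A4: "\<beta>^2 * t powr (1+\<tau>) \<le> \<beta>^2 * t powr (2*\<tau>)" using A2 by (rule mult_left_mono) simp
      have "(z x)^2 < (\<beta> * t powr \<tau>)^2" using A1 A4 A3 by linarith
      then have zx: "z x < \<beta> * t powr \<tau>"
        by (rule power_less_imp_less_base) (use \<beta> P in simp)
      have zz: "z x * z' x = z x * (h x - c) - D x * g x"
      proof -
        have ode: "z' x = h x - c - D x * g x / z x" and nz: "z x \<noteq> 0" using Hx by auto
        have "z x * z' x = z x * (h x - c) - z x * (D x * g x / z x)" unfolding ode by (simp add: algebra_simps)
        also have "z x * (D x * g x / z x) = D x * g x" using nz by simp
        finally show ?thesis .
      qed
      have "d0 * (L * t powr \<tau>) \<le> (- D x) * (- g x)"
        using Hx d0 L P unfolding t_def by (intro mult_mono) auto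
      then have Dg: "D x * g x \<ge> d0 * L * t powr \<tau>" by simp
      have "z x * (h x - c) \<le> z x * M" using Hx by (intro mult_left_mono) auto
      also have "\<dots> \<le> \<beta> * t powr \<tau> * M" using zx M by (intro mult_right_mono) auto
      finally have zh: "z x * (h x - c) \<le> \<beta> * M * t powr \<tau>" by (simp add: ac_simps)
      have b2: "\<beta>^2 * (1+\<tau>) \<le> 2 * \<beta>"
      proof -
        have "\<beta>^2 * (1+\<tau>) \<le> \<beta>^2 * 2" using \<tau> by (intro mult_left_mono) auto
        also have "\<beta>^2 \<le> \<beta>" using \<beta> by (simp add: power2_eq_square mult_left_le)
        then have "\<beta>^2 * 2 \<le> 2 * \<beta>" by simp
        finally show ?thesis .
      qed
      have "F' x = 2 * (z x * (h x - c) - D x * g x) + \<beta>^2 * (1+\<tau>) * t powr \<tau>"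
        unfolding F'_def t_def using zz by (simp add: algebra_simps)
      also have "\<dots> \<le> 2 * (\<beta> * M * t powr \<tau> - d0 * L * t powr \<tau>) + 2 * \<beta> * t powr \<tau>"
      proof -
        have "\<beta>^2 * (1+\<tau>) * t powr \<tau> \<le> 2 * \<beta> * t powr \<tau>"
          using mult_right_mono[OF b2, of "t powr \<tau>"] P by simp
        then show ?thesis using zh Dg by argo
      qed
      also have "\<dots> = 2 * t powr \<tau> * (\<beta> * (M+1) - d0 * L)" by (simp add: algebra_simps)
      also have "\<dots> < 0" using P \<beta>(3) by (simp add: mult_pos_neg)
      finally show "F' x < 0" .
    qed
    have "\<forall>x\<in>{s..e}. F x \<le> F s"
      by (rule prop_up[where T=0 and F'=F']) (use s cont der Fs in auto)
    then have "F e \<le> F s" using s by auto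
    moreover have "F e = 0" unfolding F_def using ze \<tau> by simp
    ultimately show False using Fs by simp
  qed
  show ?thesis
  proof (rule dominate[where G="\<lambda>x. Dm / \<beta> * (e - x) powr (- q)"])
    show "continuous_on {e-\<epsilon><..<e} (\<lambda>x. D x / z x)"
    proof (rule continuous_on_divide)
      show "continuous_on {e-\<epsilon><..<e} z" by (rule continuous_on_subset[OF zc]) auto
      show "continuous_on {e-\<epsilon><..<e} D" by (rule continuous_on_subset[OF Dc]) auto
      show "\<forall>x\<in>{e-\<epsilon><..<e}. z x \<noteq> 0"
      proof
        fix x assume "x \<in> {e - \<epsilon><..<e}"
        then have "x \<in> {e-\<epsilon>..<e}" by auto
        from H[OF this] show "z x \<noteq> 0" by auto
      qed
    qed
    show "(\<lambda>x. Dm / \<beta> * (e - x) powr (- q)) integrable_on {e-\<epsilon>..e}"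
      using pow_int_left[OF q(1), of \<epsilon> e] \<epsilon> by (intro integrable_on_mult_right) auto
    fix x assume x: "x \<in> {e-\<epsilon><..<e}"
    then have xx: "x \<in> {e-\<epsilon>..<e}" by auto
    note Hx = H[OF xx]
    have pq: "(e - x) powr q > 0" using x by simp
    have lb: "\<beta> * (e - x) powr q \<le> z x" using lower[OF xx] .
    have "\<bar>D x / z x\<bar> = \<bar>D x\<bar> / z x" using Hx by (simp add: abs_div)
    also have "\<dots> \<le> Dm / z x" using Hx by (intro divide_right_mono) auto
    also have "\<dots> \<le> Dm / (\<beta> * (e - x) powr q)"
    proof (rule divide_left_mono[OF lb Dm])
      have "0 < \<beta> * (e - x) powr q" using \<beta> pq by simp
      then show "0 < z x * (\<beta> * (e - x) powr q)" using Hx by simp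
    qed
    also have "\<dots> = Dm / \<beta> * (e - x) powr (- q)" using pq
      by (simp add: powr_minus divide_inverse)
    finally show "\<bar>D x / z x\<bar> \<le> Dm / \<beta> * (e - x) powr (- q)" .
  qed
qed

lemma S5:
  fixes z z' h D g :: "real \<Rightarrow> real" and c e \<epsilon> L \<tau> M d0 Dm :: real
  assumes \<epsilon>: "0 < \<epsilon>" "\<epsilon> \<le> 1" and L: "L > 0" and \<tau>: "0 < \<tau>" "\<tau> < 1" and M: "M \<ge> 0"
    and d0: "d0 > 0" and Dm: "Dm \<ge> 0"
    and zc: "continuous_on {e..e+\<epsilon>} z" and ze: "z e = 0"
    and Dc: "continuous_on {e..e+\<epsilon>} D"
    and H: "\<And>x. x \<in> {e<..e+\<epsilon>} \<Longrightarrow> (z has_real_derivative z' x) (at x)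
        \<and> z' x = h x - c - D x * g x / z x \<and> z x > 0 \<and> D x \<le> - d0 \<and> \<bar>D x\<bar> \<le> Dm
        \<and> \<bar>h x - c\<bar> \<le> M \<and> g x \<ge> L * (x - e) powr \<tau>"
  shows "(\<lambda>x. D x / z x) integrable_on {e..e+\<epsilon>}"
proof -
  define \<beta> where "\<beta> = min 1 (d0*L/(M+2))"
  have dL: "d0 * L > 0" using d0 L by simp
  have \<beta>: "0 < \<beta>" "\<beta> \<le> 1" "\<beta> * (M+1) < d0 * L"
  proof -
    show "0 < \<beta>" "\<beta> \<le> 1" unfolding \<beta>_def using dL M by auto
    have "\<beta> \<le> d0*L/(M+2)" unfolding \<beta>_def by simp
    then have "\<beta> * (M+1) \<le> d0*L/(M+2) * (M+1)" using M by (intro mult_right_mono) auto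
    also have "\<dots> < d0 * L" using dL M by (simp add: field_simps)
    finally show "\<beta> * (M+1) < d0 * L" .
  qed
  define q where "q = (1+\<tau>)/2"
  have q: "q < 1" "0 < q" using \<tau> unfolding q_def by auto
  have lower: "z s \<ge> \<beta> * (s - e) powr q" if s: "s \<in> {e<..e+\<epsilon>}" for s
  proof (rule ccontr)
    assume "\<not> z s \<ge> \<beta> * (s - e) powr q"
    then have zs: "z s < \<beta> * (s - e) powr q" by simp
    define F where "F = (\<lambda>x. \<beta>^2 * (x - e) powr (1+\<tau>) - (z x)^2)"
    define F' where "F' = (\<lambda>x. \<beta>^2 * (1+\<tau>) * (x - e) powr \<tau> - 2 * z x * z' x)"
    have "(z s)^2 < (\<beta> * (s - e) powr q)^2"
      using zs H[OF s] by (intro power_strict_mono) auto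
    also have "\<dots> = \<beta>^2 * (s - e) powr (1+\<tau>)"
      using s unfolding q_def by (simp add: power_mult_distrib sq_powr_half)
    finally have Fs: "F s > 0" unfolding F_def by simp
    have ssub: "{e..s} \<subseteq> {e..e+\<epsilon>}" using s by auto
    have cont: "continuous_on {e..s} F" unfolding F_def
      by (intro continuous_intros continuous_on_subset[OF zc ssub] continuous_on_powr') (use \<tau> in auto)
    have der: "(F has_real_derivative F' x) (at x) \<and> F' x < 0" if x: "x \<in> {e<..s}" "F x > 0" for x
    proof
      have xx: "x \<in> {e<..e+\<epsilon>}" using x s by auto
      note Hx = H[OF xx]
      define t where "t = x - e"
      have t: "0 < t" "t \<le> 1" using xx \<epsilon> unfolding t_def by auto
      have d2: "((\<lambda>x. (x - e) powr (1+\<tau>)) has_real_derivative (1+\<tau>) * (x - e) powr (1 + \<tau> - of_nat 1) * (1 - 0)) (at x)"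
        by (rule DERIV_fun_powr[OF DERIV_diff[OF DERIV_ident DERIV_const]]) (use t in \<open>simp add: t_def\<close>)
      have d1: "((\<lambda>x. (z x)^2) has_real_derivative of_nat 2 * (z' x * (z x)^(2 - Suc 0))) (at x)"
        by (rule DERIV_power) (use Hx in auto)
      have "(F has_real_derivative (\<beta>^2 * ((1+\<tau>) * (x - e) powr (1 + \<tau> - of_nat 1) * (1 - 0)) - of_nat 2 * (z' x * (z x)^(2 - Suc 0)))) (at x)"
        unfolding F_def by (intro DERIV_diff d1 DERIV_cmult d2)
      then show "(F has_real_derivative F' x) (at x)" unfolding F'_def by (simp add: algebra_simps)
      have P: "t powr \<tau> > 0" using t by simp
      have A1: "(z x)^2 < \<beta>^2 * t powr (1+\<tau>)" using x(2) unfolding F_def t_def by simp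
      have A2: "t powr (1+\<tau>) \<le> t powr (2*\<tau>)" by (rule powr_mono') (use t \<tau> in auto)
      have A3: "(\<beta> * t powr \<tau>)^2 = \<beta>^2 * t powr (2*\<tau>)"
        using sq_powr_half[of t "2*\<tau>"] t by (simp add: power_mult_distrib)
      have A4: "\<beta>^2 * t powr (1+\<tau>) \<le> \<beta>^2 * t powr (2*\<tau>)" using A2 by (rule mult_left_mono) simp
      have "(z x)^2 < (\<beta> * t powr \<tau>)^2" using A1 A4 A3 by linarith
      then have zx: "z x < \<beta> * t powr \<tau>"
        by (rule power_less_imp_less_base) (use \<beta> P in simp)
      have zz: "z x * z' x = z x * (h x - c) - D x * g x"
      proof -
        have ode: "z' x = h x - c - D x * g x / z x" and nz: "z x \<noteq> 0" using Hx by auto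
        have "z x * z' x = z x * (h x - c) - z x * (D x * g x / z x)" unfolding ode by (simp add: algebra_simps)
        also have "z x * (D x * g x / z x) = D x * g x" using nz by simp
        finally show ?thesis .
      qed
      have "d0 * (L * t powr \<tau>) \<le> (- D x) * g x"
        using Hx d0 L P unfolding t_def by (intro mult_mono) auto
      then have Dg: "D x * g x \<le> - (d0 * L * t powr \<tau>)" by simp
      have "- (z x * M) \<le> z x * (h x - c)"
      proof -
        have "z x * (- M) \<le> z x * (h x - c)" using Hx by (intro mult_left_mono) auto
        then show ?thesis by simp
      qed
      moreover have "z x * M \<le> \<beta> * t powr \<tau> * M" using zx M by (intro mult_right_mono) auto
      ultimately have zh: "- (\<beta> * M * t powr \<tau>) \<le> z x * (h x - c)" by (simp add: ac_simps)
      have b2: "\<beta>^2 * (1+\<tau>) \<le> 2 * \<beta>"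
      proof -
        have "\<beta>^2 * (1+\<tau>) \<le> \<beta>^2 * 2" using \<tau> by (intro mult_left_mono) auto
        also have "\<beta>^2 \<le> \<beta>" using \<beta> by (simp add: power2_eq_square mult_left_le)
        then have "\<beta>^2 * 2 \<le> 2 * \<beta>" by simp
        finally show ?thesis .
      qed
      have "F' x = \<beta>^2 * (1+\<tau>) * t powr \<tau> - 2 * (z x * (h x - c) - D x * g x)"
        unfolding F'_def t_def using zz by (simp add: algebra_simps)
      also have "\<dots> \<le> 2 * \<beta> * t powr \<tau> - 2 * (- (\<beta> * M * t powr \<tau>) + d0 * L * t powr \<tau>)"
      proof -
        have "\<beta>^2 * (1+\<tau>) * t powr \<tau> \<le> 2 * \<beta> * t powr \<tau>"
          using mult_right_mono[OF b2, of "t powr \<tau>"] P by simp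
        then show ?thesis using zh Dg by argo
      qed
      also have "\<dots> = 2 * t powr \<tau> * (\<beta> * (M+1) - d0 * L)" by (simp add: algebra_simps)
      also have "\<dots> < 0" using P \<beta>(3) by (simp add: mult_pos_neg)
      finally show "F' x < 0" .
    qed
    have "\<forall>x\<in>{e..s}. F x \<ge> F s"
      by (rule prop_down[where T=0 and F'=F']) (use s cont der Fs in auto)
    then have "F e \<ge> F s" using s by auto
    moreover have "F e = 0" unfolding F_def using ze \<tau> by simp
    ultimately show False using Fs by simp
  qed
  show ?thesis
  proof (rule dominate[where G="\<lambda>x. Dm / \<beta> * (x - e) powr (- q)"])
    show "continuous_on {e<..<e+\<epsilon>} (\<lambda>x. D x / z x)"
    proof (rule continuous_on_divide)
      show "continuous_on {e<..<e+\<epsilon>} z" by (rule continuous_on_subset[OF zc]) auto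
      show "continuous_on {e<..<e+\<epsilon>} D" by (rule continuous_on_subset[OF Dc]) auto
      show "\<forall>x\<in>{e<..<e+\<epsilon>}. z x \<noteq> 0"
      proof
        fix x assume "x \<in> {e<..<e+\<epsilon>}"
        then have "x \<in> {e<..e+\<epsilon>}" by auto
        from H[OF this] show "z x \<noteq> 0" by auto
      qed
    qed
    show "(\<lambda>x. Dm / \<beta> * (x - e) powr (- q)) integrable_on {e..e+\<epsilon>}"
      using pow_int_right[OF q(1), of \<epsilon> e] \<epsilon> by (intro integrable_on_mult_right) auto
    fix x assume x: "x \<in> {e<..<e+\<epsilon>}"
    then have xx: "x \<in> {e<..e+\<epsilon>}" by auto
    note Hx = H[OF xx]
    have pq: "(x - e) powr q > 0" using x by simp
    have lb: "\<beta> * (x - e) powr q \<le> z x" using lower[OF xx] .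
    have "\<bar>D x / z x\<bar> = \<bar>D x\<bar> / z x" using Hx by (simp add: abs_div)
    also have "\<dots> \<le> Dm / z x" using Hx by (intro divide_right_mono) auto
    also have "\<dots> \<le> Dm / (\<beta> * (x - e) powr q)"
    proof (rule divide_left_mono[OF lb Dm])
      have "0 < \<beta> * (x - e) powr q" using \<beta> pq by simp
      then show "0 < z x * (\<beta> * (x - e) powr q)" using Hx by simp
    qed
    also have "\<dots> = Dm / \<beta> * (x - e) powr (- q)" using pq
      by (simp add: powr_minus divide_inverse)
    finally show "\<bar>D x / z x\<bar> \<le> Dm / \<beta> * (x - e) powr (- q)" .
  qed
qed

lemma rderiv:
  fixes z z' D D' :: "real \<Rightarrow> real"
  assumes "(z has_real_derivative z' x) (at x)" "(D has_real_derivative D' x) (at x)" "z x \<noteq> 0"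
  shows "((\<lambda>x. - (D x / z x)) has_real_derivative - ((D' x * z x - D x * z' x) / (z x)^2)) (at x)"
  using DERIV_minus[OF DERIV_divide[OF assms(2,1,3)]] by (simp add: power2_eq_square)

lemma S2:
  fixes z z' h D D' g :: "real \<Rightarrow> real" and c e \<epsilon> L \<tau> M K :: real
  assumes \<epsilon>: "0 < \<epsilon>" "\<epsilon> \<le> 1" and L: "L > 0" and \<tau>: "0 < \<tau>" "\<tau> < 1" and M: "M \<ge> 0" and K: "K \<ge> 0"
    and H: "\<And>x. x \<in> {e-\<epsilon>..<e} \<Longrightarrow> (z has_real_derivative z' x) (at x)
        \<and> z' x = h x - c - D x * g x / z x \<and> z x < 0 \<and> D x > 0
        \<and> (D has_real_derivative D' x) (at x) \<and> \<bar>D' x\<bar> \<le> K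
        \<and> \<bar>h x - c\<bar> \<le> M \<and> - g x \<ge> L * (e - x) powr \<tau>"
  shows "(\<lambda>x. D x / z x) integrable_on {e-\<epsilon>..e}"
proof -
  define a where "a = e - \<epsilon>"
  define r where "r = (\<lambda>x. - (D x / z x))"
  define r' where "r' = (\<lambda>x. - ((D' x * z x - D x * z' x) / (z x)^2))"
  define B where "B = max 1 (r a)"
  define C where "C = (K+M+1)/L"
  have C0: "C > 0" unfolding C_def using K M L by simp
  have bound: "r s \<le> B + C * (e - s) powr (- \<tau>)" if s: "s \<in> {a..<e}" for s
  proof -
    define t where "t = e - s"
    have t: "0 < t" "t \<le> 1" using s \<epsilon> unfolding t_def a_def by auto
    define gl where "gl = L * t powr \<tau>"
    have gl: "gl > 0" unfolding gl_def using L t by simp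
    define T where "T = max 1 ((K+M+1)/gl)"
    have CT: "(K+M+1)/gl = C * (e - s) powr (- \<tau>)"
      unfolding gl_def C_def t_def using t by (simp add: powr_minus divide_inverse t_def)
    have nn: "0 \<le> C * (e - s) powr (- \<tau>)" using C0 by simp
    have B1: "1 \<le> B" unfolding B_def by simp
    have T1: "T \<le> B + C * (e - s) powr (- \<tau>)" unfolding T_def CT using nn B1
      by (auto simp: max_def)
    show ?thesis
    proof (rule ccontr)
      assume "\<not> ?thesis"
      then have rs: "r s > B" "r s > T" using T1 nn by linarith+
      have cont: "continuous_on {a..s} r"
      proof (rule continuous_at_imp_continuous_on, rule ballI)
        fix x assume "x \<in> {a..s}"
        then have "x \<in> {e-\<epsilon>..<e}" using s unfolding a_def by auto
        from H[OF this] have "(r has_real_derivative r' x) (at x)"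
          unfolding r_def r'_def by (intro rderiv) auto
        then show "isCont r x" by (rule DERIV_isCont)
      qed
      have der: "(r has_real_derivative r' x) (at x) \<and> r' x < 0" if x: "x \<in> {a<..s}" "r x > T" for x
      proof
        have xx: "x \<in> {e-\<epsilon>..<e}" using x s unfolding a_def by auto
        note Hx = H[OF xx]
        show "(r has_real_derivative r' x) (at x)"
          unfolding r_def r'_def using Hx by (intro rderiv) auto
        define rr where "rr = r x"
        have rr1: "rr > 1" "rr > (K+M+1)/gl" using x(2) unfolding rr_def T_def by auto
        have zn: "z x \<noteq> 0" "z x < 0" using Hx by auto
        have key: "D' x * z x - D x * z' x = (- z x) * (rr^2 * (- g x) - D' x - rr * (h x - c))"
        proof -
          have ode: "z' x = h x - c - D x * g x / z x" using Hx by auto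
          show ?thesis unfolding rr_def r_def ode using zn by (simp add: field_simps power2_eq_square)
        qed
        have "gl \<le> - g x"
        proof -
          have "t powr \<tau> \<le> (e - x) powr \<tau>" using x \<tau> t unfolding t_def by (intro powr_mono2) auto
          then have "gl \<le> L * (e - x) powr \<tau>" unfolding gl_def using L by simp
          then show ?thesis using Hx by linarith
        qed
        then have i2: "rr^2 * gl \<le> rr^2 * (- g x)" by (intro mult_left_mono) auto
        have i1: "rr * gl > K + M + 1" using rr1(2) gl by (simp add: pos_divide_less_eq)
        have i3: "rr * (K+M+1) \<le> rr * (rr * gl)" using i1 rr1 by (intro mult_left_mono) auto
        then have i3': "rr * K + rr * M + rr \<le> rr * (rr * gl)" by (simp add: algebra_simps)
        have i4: "K \<le> rr * K" using rr1 K by (simp add: mult_le_cancel_right1)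
        have i5: "rr * (h x - c) \<le> rr * M" using rr1 Hx by (intro mult_left_mono) auto
        have i6: "D' x \<le> K" using Hx by auto
        have sq: "rr^2 * gl = rr * (rr * gl)" by (simp add: power2_eq_square)
        have "rr^2 * (- g x) - D' x - rr * (h x - c) > 0"
          using i2 i3' i4 i5 i6 sq rr1 by argo
        then have "D' x * z x - D x * z' x > 0" unfolding key using zn by (intro mult_pos_pos) auto
        moreover have "(z x)^2 > 0" using zn by simp
        ultimately show "r' x < 0" unfolding r'_def by simp
      qed
      have "\<forall>x\<in>{a..s}. r x \<ge> r s"
        by (rule prop_down[where T=T and F'=r']) (use s cont der rs in auto)
      then have "r a \<ge> r s" using s by auto
      then show False using rs unfolding B_def by auto
    qed
  qed
  show ?thesis unfolding a_def[symmetric]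
  proof (rule dominate[where G="\<lambda>x. B + C * (e - x) powr (- \<tau>)"])
    show "continuous_on {a<..<e} (\<lambda>x. D x / z x)"
    proof (rule continuous_at_imp_continuous_on, rule ballI)
      fix x assume "x \<in> {a<..<e}"
      then have "x \<in> {e-\<epsilon>..<e}" unfolding a_def by auto
      from H[OF this] show "isCont (\<lambda>x. D x / z x) x"
        by (intro continuous_intros DERIV_isCont) auto
    qed
    show "(\<lambda>x. B + C * (e - x) powr (- \<tau>)) integrable_on {a..e}"
      using pow_int_left[OF \<tau>(2), of \<epsilon> e] \<epsilon> unfolding a_def
      by (intro integrable_add integrable_const_ivl integrable_on_mult_right) auto
    fix x assume x: "x \<in> {a<..<e}"
    then have xx: "x \<in> {a..<e}" by auto
    have "x \<in> {e-\<epsilon>..<e}" using x unfolding a_def by auto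
    from H[OF this] have "D x / z x < 0" by (simp add: divide_pos_neg)
    then have "\<bar>D x / z x\<bar> = r x" unfolding r_def by (simp only: abs_if) simp
    then show "\<bar>D x / z x\<bar> \<le> B + C * (e - x) powr (- \<tau>)" using bound[OF xx] by simp
  qed
qed

lemma S3:
  fixes z z' h D D' g :: "real \<Rightarrow> real" and c e \<epsilon> L \<tau> M K :: real
  assumes \<epsilon>: "0 < \<epsilon>" "\<epsilon> \<le> 1" and L: "L > 0" and \<tau>: "0 < \<tau>" "\<tau> < 1" and M: "M \<ge> 0" and K: "K \<ge> 0"
    and De: "D e = 0"
    and HD: "\<And>x. x \<in> {e..e+\<epsilon>} \<Longrightarrow> (D has_real_derivative D' x) (at x) \<and> \<bar>D' x\<bar> \<le> K"
    and H: "\<And>x. x \<in> {e<..e+\<epsilon>} \<Longrightarrow> (z has_real_derivative z' x) (at x)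
        \<and> z' x = h x - c - D x * g x / z x \<and> z x > 0 \<and> D x < 0
        \<and> \<bar>h x - c\<bar> \<le> M \<and> g x \<ge> L * (x - e) powr \<tau>"
  shows "(\<lambda>x. D x / z x) integrable_on {e..e+\<epsilon>}"
proof -
  define r where "r = (\<lambda>x. - (D x / z x))"
  define r' where "r' = (\<lambda>x. - ((D' x * z x - D x * z' x) / (z x)^2))"
  define C where "C = (2*K+M+1) * 2 powr \<tau> / L"
  have C0: "C > 0" unfolding C_def using K M L by simp
  have bound: "r s \<le> 1 + C * (s - e) powr (- \<tau>)" if s: "s \<in> {e<..e+\<epsilon>}" for s
  proof -
    define t where "t = s - e"
    have t: "0 < t" "t \<le> 1" using s \<epsilon> unfolding t_def by auto
    define m where "m = e + t/2"
    have m: "e < m" "m < s" using t unfolding m_def t_def by (auto simp: field_simps)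
    define gl where "gl = L * (t/2) powr \<tau>"
    have gl: "gl > 0" unfolding gl_def using L t by simp
    define T where "T = max 1 ((2*K+M+1)/gl)"
    have CT: "(2*K+M+1)/gl = C * (s - e) powr (- \<tau>)"
    proof -
      have p: "(t/2) powr \<tau> = t powr \<tau> / 2 powr \<tau>" by (rule powr_divide)
      have q: "(s - e) powr (- \<tau>) = inverse (t powr \<tau>)" unfolding t_def by (rule powr_minus)
      have tp: "t powr \<tau> > 0" "(2::real) powr \<tau> > 0" using t by auto
      show ?thesis unfolding gl_def C_def p q using tp L by (simp add: field_simps)
    qed
    have nn: "0 \<le> C * (s - e) powr (- \<tau>)" using C0 by simp
    have T1: "T \<le> 1 + C * (s - e) powr (- \<tau>)" unfolding T_def CT using nn
      by (auto simp: max_def)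
    show ?thesis
    proof (rule ccontr)
      assume "\<not> ?thesis"
      then have rs: "r s > T" using T1 by linarith
      then have rs1: "r s > 1" "r s > (2*K+M+1)/gl" unfolding T_def by auto
      have cont: "continuous_on {m..s} r"
      proof (rule continuous_at_imp_continuous_on, rule ballI)
        fix x assume "x \<in> {m..s}"
        then have "x \<in> {e<..e+\<epsilon>}" "x \<in> {e..e+\<epsilon>}" using s m by auto
        from H[OF this(1)] HD[OF this(2)] have "(r has_real_derivative r' x) (at x)"
          unfolding r_def r'_def by (intro rderiv) auto
        then show "isCont r x" by (rule DERIV_isCont)
      qed
      have der: "(r has_real_derivative r' x) (at x) \<and> r' x < 0" if x: "x \<in> {m<..s}" "r x > T" for x
      proof
        have xx: "x \<in> {e<..e+\<epsilon>}" "x \<in> {e..e+\<epsilon>}" using x s m by auto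
        note Hx = H[OF xx(1)] and HDx = HD[OF xx(2)]
        show "(r has_real_derivative r' x) (at x)"
          unfolding r_def r'_def using Hx HDx by (intro rderiv) auto
        define rr where "rr = r x"
        have rr1: "rr > 1" "rr > (2*K+M+1)/gl" using x(2) unfolding rr_def T_def by auto
        have zn: "z x \<noteq> 0" "z x > 0" using Hx by auto
        have key: "D' x * z x - D x * z' x = z x * (D' x + rr * (h x - c) + rr^2 * g x)"
        proof -
          have ode: "z' x = h x - c - D x * g x / z x" using Hx by auto
          show ?thesis unfolding rr_def r_def ode using zn by (simp add: field_simps power2_eq_square)
        qed
        have "gl \<le> g x"
        proof -
          have "(t/2) powr \<tau> \<le> (x - e) powr \<tau>" using x \<tau> t m unfolding m_def by (intro powr_mono2) auto
          then have "gl \<le> L * (x - e) powr \<tau>" unfolding gl_def using L by simp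
          then show ?thesis using Hx by linarith
        qed
        then have i2: "rr^2 * gl \<le> rr^2 * g x" by (intro mult_left_mono) auto
        have i1: "rr * gl > 2*K + M + 1" using rr1(2) gl by (simp add: pos_divide_less_eq)
        have i3: "rr * (2*K+M+1) \<le> rr * (rr * gl)" using i1 rr1 by (intro mult_left_mono) auto
        then have i3': "2 * (rr * K) + rr * M + rr \<le> rr * (rr * gl)" by (simp add: algebra_simps)
        have i4: "K \<le> rr * K" using rr1 K by (simp add: mult_le_cancel_right1)
        have i5: "- (rr * M) \<le> rr * (h x - c)"
        proof -
          have "rr * (- M) \<le> rr * (h x - c)" using rr1 Hx by (intro mult_left_mono) auto
          then show ?thesis by simp
        qed
        have i6: "- K \<le> D' x" using HDx by auto
        have sq: "rr^2 * gl = rr * (rr * gl)" by (simp add: power2_eq_square)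
        have "D' x + rr * (h x - c) + rr^2 * g x > 0"
          using i2 i3' i4 i5 i6 sq rr1 K by argo
        then have "D' x * z x - D x * z' x > 0" unfolding key using zn by (intro mult_pos_pos) auto
        moreover have "(z x)^2 > 0" using zn by simp
        ultimately show "r' x < 0" unfolding r'_def by simp
      qed
      have all: "\<forall>x\<in>{m..s}. r x \<ge> r s"
        by (rule prop_down[where T=T and F'=r']) (use m cont der rs in auto)
      obtain \<xi> where \<xi>: "m < \<xi>" "\<xi> < s" "z s - z m = (s - m) * z' \<xi>"
      proof -
        have "\<exists>\<xi>. m < \<xi> \<and> \<xi> < s \<and> z s - z m = (s - m) * z' \<xi>"
        proof (rule MVT2[OF m(2)])
          fix x assume "m \<le> x" "x \<le> s"
          then have "x \<in> {e<..e+\<epsilon>}" using s m by auto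
          from H[OF this] show "DERIV z x :> z' x" by auto
        qed
        then show ?thesis using that by blast
      qed
      have \<xi>x: "\<xi> \<in> {e<..e+\<epsilon>}" using \<xi> m s by auto
      note H\<xi> = H[OF \<xi>x]
      have z'\<xi>: "z' \<xi> = h \<xi> - c + r \<xi> * g \<xi>" using H\<xi> unfolding r_def by simp
      have "gl \<le> g \<xi>"
      proof -
        have "(t/2) powr \<tau> \<le> (\<xi> - e) powr \<tau>" using \<xi> \<tau> t m unfolding m_def by (intro powr_mono2) auto
        then have "gl \<le> L * (\<xi> - e) powr \<tau>" unfolding gl_def using L by simp
        then show ?thesis using H\<xi> by linarith
      qed
      moreover have "r s \<le> r \<xi>" using all \<xi> by auto
      ultimately have "r s * gl \<le> r \<xi> * g \<xi>" using rs1 gl by (intro mult_mono) auto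
      moreover have "r s * gl > 2*K+M+1" using rs1(2) gl by (simp add: pos_divide_less_eq)
      moreover have "- M \<le> h \<xi> - c" using H\<xi> by auto
      ultimately have z'b: "z' \<xi> > 2*K + 1" unfolding z'\<xi> by linarith
      have "s - m = t/2" unfolding m_def t_def by (simp add: field_simps)
      have zm: "z m > 0" using H[of m] m s by auto
      have "z s > t/2 * (2*K+1)"
      proof -
        have "t/2 * (2*K+1) < t/2 * z' \<xi>" using z'b t by simp
        then show ?thesis using \<xi>(3) \<open>s - m = t/2\<close> zm by simp
      qed
      then have zs: "z s > K * t" using t by (simp add: algebra_simps)
      obtain \<eta> where \<eta>: "e < \<eta>" "\<eta> < s" "D s - D e = (s - e) * D' \<eta>"
      proof -
        have "\<exists>\<eta>. e < \<eta> \<and> \<eta> < s \<and> D s - D e = (s - e) * D' \<eta>"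
        proof (rule MVT2)
          show "e < s" using s by simp
          fix x assume "e \<le> x" "x \<le> s"
          then have "x \<in> {e..e+\<epsilon>}" using s by auto
          from HD[OF this] show "DERIV D x :> D' x" by auto
        qed
        then show ?thesis using that by blast
      qed
      have "\<bar>D' \<eta>\<bar> \<le> K" using HD[of \<eta>] \<eta> s by auto
      then have "- D' \<eta> \<le> K" by linarith
      then have "t * (- D' \<eta>) \<le> t * K" using t by (intro mult_left_mono) auto
      moreover have "- D s = t * (- D' \<eta>)" using \<eta>(3) De unfolding t_def by simp
      ultimately have "- D s \<le> K * t" by (simp add: mult.commute)
      moreover have "r s * z s = - D s" unfolding r_def using H[OF s] by simp
      moreover have "r s * z s \<ge> 1 * z s"
      proof (rule mult_right_mono)
        have "K * t \<ge> 0" using K t by simp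
        then show "0 \<le> z s" using zs by linarith
      qed (use rs1 in auto)
      ultimately show False using zs by linarith
    qed
  qed
  show ?thesis
  proof (rule dominate[where G="\<lambda>x. 1 + C * (x - e) powr (- \<tau>)"])
    show "continuous_on {e<..<e+\<epsilon>} (\<lambda>x. D x / z x)"
    proof (rule continuous_at_imp_continuous_on, rule ballI)
      fix x assume "x \<in> {e<..<e+\<epsilon>}"
      then have "x \<in> {e<..e+\<epsilon>}" "x \<in> {e..e+\<epsilon>}" by auto
      from H[OF this(1)] HD[OF this(2)] show "isCont (\<lambda>x. D x / z x) x"
        by (intro continuous_intros DERIV_isCont) auto
    qed
    show "(\<lambda>x. 1 + C * (x - e) powr (- \<tau>)) integrable_on {e..e+\<epsilon>}"
      using pow_int_right[OF \<tau>(2), of \<epsilon> e] \<epsilon>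
      by (intro integrable_add integrable_const_ivl integrable_on_mult_right) auto
    fix x assume x: "x \<in> {e<..<e+\<epsilon>}"
    then have xx: "x \<in> {e<..e+\<epsilon>}" by auto
    from H[OF xx] have "D x / z x < 0" by (simp add: divide_neg_pos)
    then have "\<bar>D x / z x\<bar> = r x" unfolding r_def by (simp only: abs_if) simp
    then show "\<bar>D x / z x\<bar> \<le> 1 + C * (x - e) powr (- \<tau>)" using bound[OF xx] by simp
  qed
qed

locale wf_core =
  fixes f h D g z z' :: "real \<Rightarrow> real" and \<alpha> c :: real and E :: "real set"
  assumes f_C1: "\<forall>u\<in>{0..1}. (f has_real_derivative h u) (at u within {0..1})"
    and \<alpha>: "0 < \<alpha>" "\<alpha> < 1"
    and D_pos: "\<forall>u. 0 < u \<and> u < \<alpha> \<longrightarrow> D u > 0"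
    and D_neg: "\<forall>u. \<alpha> < u \<and> u < 1 \<longrightarrow> D u < 0"
    and Dc: "continuous_on {0..1} D"
    and gc: "continuous_on {0..1} g"
    and g01: "g 0 = 0" "g 1 = 0"
    and Efin: "finite E" and Esub: "E \<subseteq> {0<..<1}" and \<alpha>E: "\<alpha> \<in> E"
    and zc: "continuous_on {0..1} z"
    and zd: "\<And>u. u \<in> {0<..<1} - E \<Longrightarrow> (z has_real_derivative z' u) (at u)"
    and ode: "\<And>u. u \<in> {0<..<1} - E \<Longrightarrow> z' u = h u - c - D u * g u / z u"
    and znz: "\<And>u. u \<in> {0<..<1} - E \<Longrightarrow> z u \<noteq> 0"
    and z01: "z 0 = 0" "z 1 = 0" and zE: "\<And>u. u \<in> E \<Longrightarrow> z u = 0"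
    and sgn: "\<And>u. u \<in> {0..1} \<Longrightarrow> D u / z u \<le> 0"
    and kint: "\<And>a b. 0 < a \<Longrightarrow> b < 1 \<Longrightarrow> (\<lambda>u. D u / z u) integrable_on {a..b}"
begin

definition k where "k u = D u / z u"
definition Xi where "Xi u = (if \<alpha> \<le> u then integral {\<alpha>..u} k else - integral {u..\<alpha>} k)"

lemma kint': "0 < a \<Longrightarrow> b < 1 \<Longrightarrow> k integrable_on {a..b}"
  using kint unfolding k_def[abs_def] by blast

lemma D_nz: "u \<in> {0<..<1} - E \<Longrightarrow> D u \<noteq> 0"
proof -
  assume u: "u \<in> {0<..<1} - E"
  then have "u \<noteq> \<alpha>" using \<alpha>E by auto
  show "D u \<noteq> 0"
  proof (cases "u < \<alpha>")
    case True
    then have "D u > 0" using D_pos u by auto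
    then show ?thesis by simp
  next
    case False
    then have "D u < 0" using D_neg u \<open>u \<noteq> \<alpha>\<close> by auto
    then show ?thesis by simp
  qed
qed

lemma k_neg: "u \<in> {0<..<1} - E \<Longrightarrow> k u < 0"
proof -
  assume u: "u \<in> {0<..<1} - E"
  have "k u \<le> 0" using sgn[of u] u unfolding k_def by auto
  moreover have "k u \<noteq> 0" using D_nz[OF u] znz[OF u] unfolding k_def by simp
  ultimately show ?thesis by simp
qed

lemma k_le: "u \<in> {0..1} \<Longrightarrow> k u \<le> 0"
  using sgn unfolding k_def by auto

lemma Xi_diff:
  assumes "0 < a" "a \<le> b" "b < 1"
  shows "Xi b - Xi a = integral {a..b} k"
proof -
  consider "\<alpha> \<le> a" | "a < \<alpha>" "\<alpha> \<le> b" | "b < \<alpha>" by linarith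
  then show ?thesis
  proof cases
    case 1
    have "integral {\<alpha>..a} k + integral {a..b} k = integral {\<alpha>..b} k"
      by (rule Henstock_Kurzweil_Integration.integral_combine) (use 1 assms \<alpha> in \<open>auto intro: kint'\<close>)
    then show ?thesis unfolding Xi_def using 1 assms by auto
  next
    case 2
    have "integral {a..\<alpha>} k + integral {\<alpha>..b} k = integral {a..b} k"
      by (rule Henstock_Kurzweil_Integration.integral_combine) (use 2 assms \<alpha> in \<open>auto intro: kint'\<close>)
    then show ?thesis unfolding Xi_def using 2 assms by auto
  next
    case 3
    have "integral {a..b} k + integral {b..\<alpha>} k = integral {a..\<alpha>} k"
      by (rule Henstock_Kurzweil_Integration.integral_combine) (use 3 assms \<alpha> in \<open>auto intro: kint'\<close>)
    then show ?thesis unfolding Xi_def using 3 assms by auto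
  qed
qed

lemma Xi_mono:
  assumes "0 < a" "a \<le> b" "b < 1"
  shows "Xi b \<le> Xi a"
proof -
  have "integral {a..b} k \<le> integral {a..b} (\<lambda>_. 0::real)"
    by (rule integral_le) (use assms k_le in \<open>auto intro: kint'\<close>)
  then show ?thesis using Xi_diff[OF assms] by simp
qed

lemma Xi_cont_on:
  assumes "0 < a" "b < 1"
  shows "continuous_on {a..b} Xi"
proof (cases "a \<le> b")
  case True
  have "continuous_on {a..b} (\<lambda>x. Xi a + integral {a..x} k)"
    by (intro continuous_intros indefinite_integral_continuous_1 kint' assms)
  moreover have "Xi a + integral {a..x} k = Xi x" if "x \<in> {a..b}" for x
    using Xi_diff[of a x] that assms by auto
  ultimately show ?thesis using continuous_on_eq by blast
qed simp

lemma Xi_cont: "u \<in> {0<..<1} \<Longrightarrow> isCont Xi u"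
proof -
  assume u: "u \<in> {0<..<1}"
  have "continuous_on {u/2..(u+1)/2} Xi" by (rule Xi_cont_on) (use u in auto)
  moreover have "u \<in> interior {u/2..(u+1)/2}" using u by auto
  ultimately show ?thesis using continuous_on_interior by blast
qed

lemma avoid_E:
  assumes "u \<in> {0<..<1} - E"
  obtains a b where "0 < a" "a < u" "u < b" "b < 1" "{a..b} \<inter> E = {}"
proof -
  obtain e where e: "e > 0" "\<forall>w\<in>ball u e. w \<in> UNIV \<and> (w \<noteq> u \<longrightarrow> w \<notin> E)"
    using finite_ball_avoid[OF open_UNIV Efin, of u] by auto
  define a where "a = max (u/2) (u - e/2)"
  define b where "b = min ((u+1)/2) (u + e/2)"
  have "0 < u/2" "u/2 < u" "u < (u+1)/2" "(u+1)/2 < 1" "u - e/2 < u" "u < u + e/2" using assms e by auto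
  then have ab: "0 < a" "a < u" "u < b" "b < 1" unfolding a_def b_def
    by (simp_all add: min_less_iff_disj less_max_iff_disj max_less_iff_conj min_less_iff_conj)
  have "{a..b} \<subseteq> ball u e" using e unfolding a_def b_def by (auto simp: dist_real_def)
  then have "{a..b} \<inter> E = {}" using e assms by auto
  then show ?thesis using ab that by blast
qed

lemma Xi_deriv:
  assumes u: "u \<in> {0<..<1} - E"
  shows "(Xi has_real_derivative k u) (at u)"
proof -
  obtain a b where ab: "0 < a" "a < u" "u < b" "b < 1" "{a..b} \<inter> E = {}"
    using avoid_E[OF u] by blast
  have kc: "continuous_on {a..b} k"
  proof (rule continuous_at_imp_continuous_on, rule ballI)
    fix x assume x: "x \<in> {a..b}"
    then have xx: "x \<in> {0<..<1} - E" using ab by auto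
    have "isCont z x" using zd[OF xx] by (rule DERIV_isCont)
    moreover have "isCont D x" using continuous_on_interior[OF Dc, of x] xx by auto
    ultimately show "isCont k x" unfolding k_def[abs_def] using znz[OF xx] by (intro continuous_intros) auto
  qed
  have "((\<lambda>x. integral {a..x} k) has_vector_derivative k u) (at u within {a..b})"
    by (rule integral_has_vector_derivative[OF kc]) (use ab in auto)
  then have "((\<lambda>x. integral {a..x} k) has_real_derivative k u) (at u)"
    using at_within_Icc_at[of a u b] ab by (simp add: has_real_derivative_iff_has_vector_derivative)
  then have "((\<lambda>x. Xi a + integral {a..x} k) has_real_derivative k u) (at u)"
    using DERIV_add[OF DERIV_const] by fastforce
  then show ?thesis
  proof (rule has_field_derivative_transform_within_open[where S="{a<..<b}"])
    show "open {a<..<b}" by simp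
    show "u \<in> {a<..<b}" using ab by simp
    fix x assume "x \<in> {a<..<b}"
    then show "Xi a + integral {a..x} k = Xi x" using Xi_diff[of a x] ab by auto
  qed
qed

lemma Xi_strict:
  assumes "0 < a" "a < b" "b < 1"
  shows "Xi b < Xi a"
proof -
  have "infinite {a<..<b}" using assms by simp
  then have "{a<..<b} - E \<noteq> {}" using Efin
    by (metis Diff_infinite_finite finite.emptyI)
  then obtain p where "p \<in> {a<..<b} - E" by blast
  then have p: "p \<in> {a<..<b}" "p \<notin> E" by auto
  then have pp: "p \<in> {0<..<1} - E" using assms by auto
  obtain a' b' where ab': "0 < a'" "a' < p" "p < b'" "b' < 1" "{a'..b'} \<inter> E = {}"
    using avoid_E[OF pp] by blast
  define m1 where "m1 = max a' ((a+p)/2)"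
  define m2 where "m2 = min b' ((p+b)/2)"
  have "a < (a+p)/2" "(a+p)/2 < p" "p < (p+b)/2" "(p+b)/2 < b" using p by (auto simp: field_simps)
  note hv = this
  have "m1 < p" "p < m2" unfolding m1_def m2_def using hv ab' by auto
  moreover have "a < m1" "m2 < b" "a' \<le> m1" "m2 \<le> b'" unfolding m1_def m2_def using hv
    by (auto simp: less_max_iff_disj min_less_iff_disj)
  ultimately have m: "a < m1" "m1 < m2" "m2 < b" "a' \<le> m1" "m2 \<le> b'" by auto
  obtain \<xi> where \<xi>: "m1 < \<xi>" "\<xi> < m2" "Xi m2 - Xi m1 = (m2 - m1) * k \<xi>"
  proof -
    have "\<exists>\<xi>. m1 < \<xi> \<and> \<xi> < m2 \<and> Xi m2 - Xi m1 = (m2 - m1) * k \<xi>"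
    proof (rule MVT2[OF m(2)])
      fix x assume x: "m1 \<le> x" "x \<le> m2"
      then have "x \<in> {a'..b'}" using m by auto
      then have "x \<notin> E" using ab'(5) by blast
      moreover have "x \<in> {0<..<1}" using x m ab' by auto
      ultimately show "DERIV Xi x :> k x" by (intro Xi_deriv) auto
    qed
    then show ?thesis using that by blast
  qed
  have "\<xi> \<in> {a'..b'}" using \<xi> m by auto
  then have "\<xi> \<notin> E" using ab'(5) by blast
  then have "\<xi> \<in> {0<..<1} - E" using \<xi> m ab' assms by auto
  then have "k \<xi> < 0" by (rule k_neg)
  moreover have "m2 - m1 > 0" using m by simp
  ultimately have "(m2 - m1) * k \<xi> < 0" by (simp add: mult_pos_neg)
  then have "Xi m2 < Xi m1" using \<xi>(3) by linarith
  moreover have "Xi b \<le> Xi m2" by (rule Xi_mono) (use m assms in auto)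
  moreover have "Xi m1 \<le> Xi a" by (rule Xi_mono) (use m assms in auto)
  ultimately show ?thesis by linarith
qed

end

context wf_core begin

definition SS where "SS \<xi> = {0} \<union> {u \<in> {0<..<1}. Xi u \<ge> \<xi>}"
definition phi where "phi \<xi> = Sup (SS \<xi>)"

lemma SS_ne: "SS \<xi> \<noteq> {}" unfolding SS_def by auto
lemma SS_bdd: "bdd_above (SS \<xi>)" unfolding SS_def by (auto intro: bdd_aboveI[where M=1])

lemma phi_ge0: "0 \<le> phi \<xi>"
  unfolding phi_def by (rule cSup_upper[OF _ SS_bdd]) (simp add: SS_def)

lemma phi_le1: "phi \<xi> \<le> 1"
  unfolding phi_def by (rule cSup_least[OF SS_ne]) (auto simp: SS_def)

lemma phi_01: "phi \<xi> \<in> {0..1}" using phi_ge0 phi_le1 by auto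

lemma phi_lb: "u \<in> {0<..<1} \<Longrightarrow> \<xi> \<le> Xi u \<Longrightarrow> u \<le> phi \<xi>"
  unfolding phi_def by (rule cSup_upper[OF _ SS_bdd]) (simp add: SS_def)

lemma phi_ub:
  assumes u: "u \<in> {0<..<1}" and lt: "Xi u < \<xi>"
  shows "phi \<xi> \<le> u"
  unfolding phi_def
proof (rule cSup_least[OF SS_ne])
  fix v assume "v \<in> SS \<xi>"
  then consider "v = 0" | "v \<in> {0<..<1}" "Xi v \<ge> \<xi>" unfolding SS_def by auto
  then show "v \<le> u"
  proof cases
    case 1 then show ?thesis using u by simp
  next
    case 2
    show ?thesis
    proof (rule ccontr)
      assume "\<not> v \<le> u"
      then have "Xi v < Xi u" using Xi_strict[of u v] u 2 by auto
      then show False using 2 lt by simp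
    qed
  qed
qed

lemma phi_Xi:
  assumes "0 < phi \<xi>" "phi \<xi> < 1"
  shows "Xi (phi \<xi>) = \<xi>"
proof -
  define u where "u = phi \<xi>"
  have u: "u \<in> {0<..<1}" using assms unfolding u_def by auto
  have lim: "(Xi \<longlongrightarrow> Xi u) (at u)" using Xi_cont[OF u] by (simp add: isCont_def)
  have "\<xi> \<le> Xi u"
  proof (rule tendsto_lowerbound)
    show "(Xi \<longlongrightarrow> Xi u) (at_left u)" using lim by (rule tendsto_mono[OF at_le, rotated]) simp
    show "\<not> trivial_limit (at_left u)" by simp
    have "eventually (\<lambda>v. v \<in> {0<..<u}) (at_left u)" using u by (intro eventually_at_left_real) auto
    then show "eventually (\<lambda>v. \<xi> \<le> Xi v) (at_left u)"
    proof eventually_elim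
      case (elim v)
      show ?case
      proof (rule ccontr)
        assume "\<not> \<xi> \<le> Xi v"
        then have "phi \<xi> \<le> v" using elim u by (intro phi_ub) auto
        then show False using elim unfolding u_def by auto
      qed
    qed
  qed
  moreover have "Xi u \<le> \<xi>"
  proof (rule tendsto_upperbound)
    show "(Xi \<longlongrightarrow> Xi u) (at_right u)" using lim by (rule tendsto_mono[OF at_le, rotated]) simp
    show "\<not> trivial_limit (at_right u)" by simp
    have "eventually (\<lambda>v. v \<in> {u<..<1}) (at_right u)" using u by (intro eventually_at_right_real) auto
    then show "eventually (\<lambda>v. \<xi> \<ge> Xi v) (at_right u)"
    proof eventually_elim
      case (elim v)
      show ?case
      proof (rule ccontr)
        assume "\<not> \<xi> \<ge> Xi v"
        then have "v \<le> phi \<xi>" using elim u by (intro phi_lb) auto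
        then show False using elim unfolding u_def by auto
      qed
    qed
  qed
  ultimately show ?thesis unfolding u_def by simp
qed

lemma phi_antimono: "\<xi>1 \<le> \<xi>2 \<Longrightarrow> phi \<xi>2 \<le> phi \<xi>1"
  unfolding phi_def by (rule cSup_subset_mono[OF SS_ne SS_bdd]) (auto simp: SS_def)

lemma phi_isCont: "isCont phi \<xi>0"
  unfolding isCont_def
proof (rule order_tendstoI)
  fix a assume a: "a < phi \<xi>0"
  show "eventually (\<lambda>\<xi>. a < phi \<xi>) (at \<xi>0)"
  proof (cases "a < 0")
    case True then show ?thesis
      by (intro always_eventually allI) (use phi_ge0 in \<open>smt (verit)\<close>)
  next
    case False
    define u1 where "u1 = (a + phi \<xi>0)/2"
    have u1: "a < u1" "u1 < phi \<xi>0" "0 < u1" "u1 < 1" using a False phi_le1[of \<xi>0] unfolding u1_def by auto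
    obtain v where v: "v \<in> SS \<xi>0" "u1 < v" using less_cSupD[OF SS_ne u1(2)[unfolded phi_def]] by blast
    then have v2: "v \<in> {0<..<1}" "Xi v \<ge> \<xi>0" using u1 unfolding SS_def by auto
    have "Xi v < Xi u1" by (rule Xi_strict) (use u1 v v2 in auto)
    then have "\<xi>0 < Xi u1" using v2 by simp
    then have "eventually (\<lambda>\<xi>. \<xi> < Xi u1) (at \<xi>0)"
      by (intro order_tendstoD(2)[OF tendsto_ident_at])
    then show ?thesis
    proof eventually_elim
      case (elim \<xi>)
      then have "u1 \<le> phi \<xi>" using u1 by (intro phi_lb) auto
      then show ?case using u1 by simp
    qed
  qed
next
  fix a assume a: "phi \<xi>0 < a"
  show "eventually (\<lambda>\<xi>. phi \<xi> < a) (at \<xi>0)"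
  proof (cases "a > 1")
    case True then show ?thesis
      by (intro always_eventually allI) (use phi_le1 in \<open>smt (verit)\<close>)
  next
    case False
    define u2 where "u2 = (a + phi \<xi>0)/2"
    have u2: "u2 < a" "phi \<xi>0 < u2" "0 < u2" "u2 < 1" using a False phi_ge0[of \<xi>0] unfolding u2_def by auto
    have "Xi u2 < \<xi>0"
    proof (rule ccontr)
      assume "\<not> Xi u2 < \<xi>0"
      then have "u2 \<le> phi \<xi>0" using u2 by (intro phi_lb) auto
      then show False using u2 by simp
    qed
    then have "eventually (\<lambda>\<xi>. Xi u2 < \<xi>) (at \<xi>0)"
      by (intro order_tendstoD(1)[OF tendsto_ident_at])
    then show ?thesis
    proof eventually_elim
      case (elim \<xi>)
      then have "phi \<xi> \<le> u2" using u2 by (intro phi_ub) auto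
      then show ?case using u2 by simp
    qed
  qed
qed

lemma phi_cont: "continuous_on UNIV phi"
  using phi_isCont by (simp add: continuous_at_imp_continuous_on)

lemma phi_bot: "(phi \<longlongrightarrow> 1) at_bot"
proof (rule order_tendstoI)
  fix a :: real assume a: "a < 1"
  define u where "u = max (1/2) ((a+1)/2)"
  have u: "a < u" "0 < u" "u < 1" using a unfolding u_def by (auto simp: less_max_iff_disj)
  have "eventually (\<lambda>\<xi>. \<xi> \<le> Xi u) at_bot" by (auto simp: eventually_at_bot_linorder)
  then show "eventually (\<lambda>\<xi>. a < phi \<xi>) at_bot"
  proof eventually_elim
    case (elim \<xi>)
    then have "u \<le> phi \<xi>" using u by (intro phi_lb) auto
    then show ?case using u by simp
  qed
next
  fix a :: real assume "1 < a"
  then show "eventually (\<lambda>\<xi>. phi \<xi> < a) at_bot"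
    by (intro always_eventually allI) (use phi_le1 in \<open>smt (verit)\<close>)
qed

lemma phi_top: "(phi \<longlongrightarrow> 0) at_top"
proof (rule order_tendstoI)
  fix a :: real assume "a < 0"
  then show "eventually (\<lambda>\<xi>. a < phi \<xi>) at_top"
    by (intro always_eventually allI) (use phi_ge0 in \<open>smt (verit)\<close>)
next
  fix a :: real assume a: "0 < a"
  define u where "u = min (1/2) (a/2)"
  have u: "u < a" "0 < u" "u < 1" using a unfolding u_def by (auto simp: min_less_iff_disj)
  have "eventually (\<lambda>\<xi>. \<xi> \<ge> Xi u + 1) at_top" by (auto simp: eventually_at_top_linorder)
  then show "eventually (\<lambda>\<xi>. phi \<xi> < a) at_top"
  proof eventually_elim
    case (elim \<xi>)
    then have "phi \<xi> \<le> u" using u by (intro phi_ub) auto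
    then show ?case using u by simp
  qed
qed

lemma phi_deriv:
  assumes u0: "phi \<xi> \<in> {0<..<1} - E"
  shows "(phi has_real_derivative z (phi \<xi>) / D (phi \<xi>)) (at \<xi>)"
proof -
  define u where "u = phi \<xi>"
  have u: "u \<in> {0<..<1}" using u0 unfolding u_def by auto
  have Xu: "Xi u = \<xi>" using phi_Xi u unfolding u_def by auto
  define u1 where "u1 = u/2"
  define u2 where "u2 = (u+1)/2"
  have uu: "0 < u1" "u1 < u" "u < u2" "u2 < 1" using u unfolding u1_def u2_def by auto
  have ab: "Xi u2 < \<xi>" "\<xi> < Xi u1" using Xi_strict[of u u2] Xi_strict[of u1 u] uu Xu by auto
  have "(phi has_real_derivative inverse (k u)) (at \<xi>)"
  proof (rule DERIV_inverse_function[where f=Xi and a="Xi u2" and b="Xi u1"])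
    show "(Xi has_real_derivative k u) (at (phi \<xi>))" using Xi_deriv[OF u0] unfolding u_def .
    show "k u \<noteq> 0" using k_neg[OF u0] unfolding u_def by simp
    show "Xi u2 < \<xi>" "\<xi> < Xi u1" using ab by auto
    show "isCont phi \<xi>" by (rule phi_isCont)
    fix y assume y: "Xi u2 < y" "y < Xi u1"
    have "u1 \<le> phi y" using y uu by (intro phi_lb) auto
    moreover have "phi y \<le> u2" using y uu by (intro phi_ub) auto
    ultimately show "Xi (phi y) = y" using uu by (intro phi_Xi) auto
  qed
  then show ?thesis unfolding u_def k_def by simp
qed

end

context wf_core begin

definition Sx where "Sx = Xi ` E \<union> {Inf {x. phi x = 0}, Sup {x. phi x = 1}}"

lemma Sx_fin: "finite Sx" unfolding Sx_def using Efin by simp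

lemma zero_after: "phi \<xi>1 = 0 \<Longrightarrow> \<xi>1 \<le> x \<Longrightarrow> phi x = 0"
  using phi_antimono[of \<xi>1 x] phi_ge0[of x] by simp

lemma one_before: "phi \<xi>1 = 1 \<Longrightarrow> x \<le> \<xi>1 \<Longrightarrow> phi x = 1"
  using phi_antimono[of x \<xi>1] phi_le1[of x] by simp

lemma good:
  assumes "\<xi> \<notin> Sx"
  shows "phi \<xi> \<in> {0<..<1} - E \<or> (\<exists>\<xi>1<\<xi>. phi \<xi>1 = 0) \<or> (\<exists>\<xi>1>\<xi>. phi \<xi>1 = 1)"
proof -
  consider "phi \<xi> = 0" | "phi \<xi> = 1" | "phi \<xi> \<in> {0<..<1}" using phi_01[of \<xi>] by fastforce
  then show ?thesis
  proof cases
    case 1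
    define Z where "Z = {x. phi x = 0}"
    have "\<xi> \<in> Z" using 1 unfolding Z_def by simp
    have "\<exists>\<xi>1\<in>Z. \<xi>1 < \<xi>"
    proof (cases "bdd_below Z")
      case True
      have "Inf Z \<le> \<xi>" using cInf_lower[OF \<open>\<xi> \<in> Z\<close> True] .
      moreover have "Inf Z \<noteq> \<xi>" using assms unfolding Sx_def Z_def by auto
      ultimately have "Inf Z < \<xi>" by simp
      then show ?thesis using cInf_lessD[of Z \<xi>] \<open>\<xi> \<in> Z\<close> by blast
    next
      case False
      then show ?thesis unfolding bdd_below_def by (meson not_le)
    qed
    then show ?thesis unfolding Z_def by auto
  next
    case 2
    define Z where "Z = {x. phi x = 1}"
    have "\<xi> \<in> Z" using 2 unfolding Z_def by simp
    have "\<exists>\<xi>1\<in>Z. \<xi>1 > \<xi>"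
    proof (cases "bdd_above Z")
      case True
      have "\<xi> \<le> Sup Z" using cSup_upper[OF \<open>\<xi> \<in> Z\<close> True] .
      moreover have "Sup Z \<noteq> \<xi>" using assms unfolding Sx_def Z_def by auto
      ultimately have "\<xi> < Sup Z" by simp
      then show ?thesis using less_cSupD[of Z \<xi>] \<open>\<xi> \<in> Z\<close> by blast
    next
      case False
      then show ?thesis unfolding bdd_above_def by (meson not_le)
    qed
    then show ?thesis unfolding Z_def by auto
  next
    case 3
    have "phi \<xi> \<notin> E"
    proof
      assume "phi \<xi> \<in> E"
      moreover have "Xi (phi \<xi>) = \<xi>" using 3 by (intro phi_Xi) auto
      ultimately have "\<xi> \<in> Xi ` E" by force
      then show False using assms unfolding Sx_def by auto
    qed
    then show ?thesis using 3 by auto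
  qed
qed

lemma loc_const0:
  assumes "phi \<xi>1 = 0" "\<xi>1 < \<xi>"
  shows "((\<lambda>x. Q (phi x)) has_real_derivative 0) (at \<xi>)"
proof (rule has_field_derivative_transform_within_open[OF DERIV_const[of "Q 0"], where S="{\<xi>1<..}"])
  show "open {\<xi>1<..}" by simp
  show "\<xi> \<in> {\<xi>1<..}" using assms by simp
  fix x assume "x \<in> {\<xi>1<..}"
  then have "phi x = 0" using zero_after[OF assms(1)] by auto
  then show "Q 0 = Q (phi x)" by simp
qed

lemma loc_const1:
  assumes "phi \<xi>1 = 1" "\<xi> < \<xi>1"
  shows "((\<lambda>x. Q (phi x)) has_real_derivative 0) (at \<xi>)"
proof (rule has_field_derivative_transform_within_open[OF DERIV_const[of "Q 1"], where S="{..<\<xi>1}"])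
  show "open {..<\<xi>1}" by simp
  show "\<xi> \<in> {..<\<xi>1}" using assms by simp
  fix x assume "x \<in> {..<\<xi>1}"
  then have "phi x = 1" using one_before[OF assms(1)] by auto
  then show "Q 1 = Q (phi x)" by simp
qed

definition dphi where "dphi \<xi> = z (phi \<xi>) / D (phi \<xi>)"
definition w where "w \<xi> = z (phi \<xi>) - f (phi \<xi>) + c * phi \<xi>"

lemma phi_der:
  assumes "\<xi> \<notin> Sx"
  shows "(phi has_real_derivative dphi \<xi>) (at \<xi>)"
proof -
  from good[OF assms] consider "phi \<xi> \<in> {0<..<1} - E" | "\<exists>\<xi>1<\<xi>. phi \<xi>1 = 0" | "\<exists>\<xi>1>\<xi>. phi \<xi>1 = 1"
    by blast
  then show ?thesis
  proof cases
    case 1 then show ?thesis unfolding dphi_def by (rule phi_deriv)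
  next
    case 2
    then obtain \<xi>1 where "\<xi>1 < \<xi>" "phi \<xi>1 = 0" by blast
    then have "((\<lambda>x. (\<lambda>u. u) (phi x)) has_real_derivative 0) (at \<xi>)" by (intro loc_const0)
    moreover have "phi \<xi> = 0" using zero_after \<open>\<xi>1 < \<xi>\<close> \<open>phi \<xi>1 = 0\<close> by auto
    ultimately show ?thesis unfolding dphi_def using z01 by simp
  next
    case 3
    then obtain \<xi>1 where "\<xi>1 > \<xi>" "phi \<xi>1 = 1" by blast
    then have "((\<lambda>x. (\<lambda>u. u) (phi x)) has_real_derivative 0) (at \<xi>)" by (intro loc_const1)
    moreover have "phi \<xi> = 1" using one_before \<open>\<xi>1 > \<xi>\<close> \<open>phi \<xi>1 = 1\<close> by auto
    ultimately show ?thesis unfolding dphi_def using z01 by simp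
  qed
qed

lemma w_der:
  assumes "\<xi> \<notin> Sx"
  shows "(w has_real_derivative - g (phi \<xi>)) (at \<xi>)"
proof -
  define Q where "Q = (\<lambda>u. z u - f u + c * u)"
  have wQ: "w = (\<lambda>x. Q (phi x))" unfolding w_def[abs_def] Q_def by simp
  from good[OF assms] consider "phi \<xi> \<in> {0<..<1} - E" | "\<exists>\<xi>1<\<xi>. phi \<xi>1 = 0" | "\<exists>\<xi>1>\<xi>. phi \<xi>1 = 1"
    by blast
  then show ?thesis
  proof cases
    case 1
    define u where "u = phi \<xi>"
    have u: "u \<in> {0<..<1} - E" using 1 unfolding u_def .
    have pd: "(phi has_real_derivative dphi \<xi>) (at \<xi>)" by (rule phi_der[OF assms])
    have d1: "((\<lambda>x. z (phi x)) has_real_derivative z' u * dphi \<xi>) (at \<xi>)"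
      using DERIV_chain2[OF zd[OF 1] pd] unfolding u_def .
    have "(f has_real_derivative h (phi \<xi>)) (at (phi \<xi>) within {0..1})" using f_C1 u unfolding u_def by auto
    then have "(f has_real_derivative h (phi \<xi>)) (at (phi \<xi>))"
      using at_within_Icc_at[of 0 "phi \<xi>" 1] u unfolding u_def by auto
    from DERIV_chain2[OF this pd]
    have d2: "((\<lambda>x. f (phi x)) has_real_derivative h u * dphi \<xi>) (at \<xi>)"
      unfolding u_def .
    have d3: "((\<lambda>x. c * phi x) has_real_derivative c * dphi \<xi>) (at \<xi>)" using DERIV_cmult[OF pd] .
    have "(w has_real_derivative z' u * dphi \<xi> - h u * dphi \<xi> + c * dphi \<xi>) (at \<xi>)"
      unfolding w_def[abs_def] by (intro DERIV_add DERIV_diff d1 d2 d3)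
    moreover have "z' u * dphi \<xi> - h u * dphi \<xi> + c * dphi \<xi> = - g u"
    proof -
      have "D u \<noteq> 0" "z u \<noteq> 0" using D_nz[OF u] znz[OF u] by auto
      then show ?thesis unfolding dphi_def u_def[symmetric] ode[OF u] by (simp add: field_simps)
    qed
    ultimately show ?thesis unfolding u_def by simp
  next
    case 2
    then obtain \<xi>1 where "\<xi>1 < \<xi>" "phi \<xi>1 = 0" by blast
    then have "((\<lambda>x. Q (phi x)) has_real_derivative 0) (at \<xi>)" by (intro loc_const0)
    moreover have "phi \<xi> = 0" using zero_after \<open>\<xi>1 < \<xi>\<close> \<open>phi \<xi>1 = 0\<close> by auto
    ultimately show ?thesis unfolding wQ using g01 by simp
  next
    case 3
    then obtain \<xi>1 where "\<xi>1 > \<xi>" "phi \<xi>1 = 1" by blast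
    then have "((\<lambda>x. Q (phi x)) has_real_derivative 0) (at \<xi>)" by (intro loc_const1)
    moreover have "phi \<xi> = 1" using one_before \<open>\<xi>1 > \<xi>\<close> \<open>phi \<xi>1 = 1\<close> by auto
    ultimately show ?thesis unfolding wQ using g01 by simp
  qed
qed

lemma phi_img: "phi ` UNIV \<subseteq> {0..1}" using phi_01 by auto

lemma f_cont: "continuous_on {0..1} f"
  by (rule DERIV_continuous_on) (use f_C1 in auto)

lemma w_cont: "continuous_on UNIV w"
  unfolding w_def[abs_def]
  by (intro continuous_intros continuous_on_compose2[OF zc phi_cont phi_img]
      continuous_on_compose2[OF f_cont phi_cont phi_img] phi_cont)

lemma gphi_cont: "continuous_on UNIV (\<lambda>x. g (phi x))"
  by (rule continuous_on_compose2[OF gc phi_cont phi_img])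

lemma zphi_cont: "continuous_on UNIV (\<lambda>x. z (phi x))"
  by (rule continuous_on_compose2[OF zc phi_cont phi_img])

lemma Dphi_cont: "continuous_on UNIV (\<lambda>x. D (phi x))"
  by (rule continuous_on_compose2[OF Dc phi_cont phi_img])

lemma sign_swap: "(a::real) / b \<le> 0 \<Longrightarrow> b / a \<le> 0"
  by (cases "a > 0"; cases "b > 0"; cases "a = 0"; cases "b = 0")
     (auto simp: divide_pos_neg divide_neg_pos not_less divide_nonneg_nonpos divide_nonpos_nonneg
       zero_le_divide_iff divide_le_0_iff)

lemma dphi_le: "dphi \<xi> \<le> 0"
  unfolding dphi_def using sgn[OF phi_01[of \<xi>]] by (rule sign_swap)

lemma D_zero: "u \<in> {0..1} \<Longrightarrow> D u = 0 \<Longrightarrow> z u = 0"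
proof -
  assume u: "u \<in> {0..1}" and D0: "D u = 0"
  consider "u = 0" | "u = 1" | "u = \<alpha>" | "0 < u \<and> u < \<alpha>" | "\<alpha> < u \<and> u < 1" using u by fastforce
  then show "z u = 0"
  proof cases
    case 4 then show ?thesis using D_pos D0 by force
  next
    case 5 then show ?thesis using D_neg D0 by force
  qed (use z01 zE \<alpha>E in auto)
qed

lemma D_dphi: "D (phi \<xi>) * dphi \<xi> = z (phi \<xi>)"
proof (cases "D (phi \<xi>) = 0")
  case True
  then show ?thesis using D_zero[OF phi_01] unfolding dphi_def by simp
qed (simp add: dphi_def)

end

lemma abs_to_lborel:
  fixes f :: "real \<Rightarrow> real"
  assumes m0: "f \<in> borel_measurable borel" and ai: "f absolutely_integrable_on S" and S: "S \<in> sets borel"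
  shows "set_integrable lborel S f"
proof -
  have m: "(\<lambda>x. indicator S x *\<^sub>R f x) \<in> borel_measurable lborel"
    using m0 S by (intro borel_measurable_scaleR borel_measurable_indicator) auto
  from ai have "integrable (completion lborel) (\<lambda>x. indicator S x *\<^sub>R f x)"
    unfolding set_integrable_def .
  then show ?thesis unfolding set_integrable_def using integrable_completion[OF m] by simp
qed

lemma test_props:
  fixes \<psi> :: "real \<Rightarrow> real"
  assumes "test_fun \<psi>"
  shows "\<And>x. (\<psi> has_real_derivative deriv \<psi> x) (at x)"
    and "continuous_on UNIV \<psi>" and "continuous_on UNIV (deriv \<psi>)"
    and "\<exists>R>0. \<forall>x. R \<le> \<bar>x\<bar> \<longrightarrow> \<psi> x = 0 \<and> deriv \<psi> x = 0"
proof -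
  have d0: "\<psi> differentiable (at x)" for x using assms unfolding test_fun_def
    by (metis funpow_0)
  have d1: "deriv \<psi> differentiable (at x)" for x using assms unfolding test_fun_def
    by (metis funpow_0 funpow_Suc_right o_apply One_nat_def funpow.simps(2))
  show D: "(\<psi> has_real_derivative deriv \<psi> x) (at x)" for x
    using d0 DERIV_deriv_iff_real_differentiable by blast
  show "continuous_on UNIV \<psi>"
    using d0 by (intro continuous_at_imp_continuous_on ballI differentiable_imp_continuous_within)
  show "continuous_on UNIV (deriv \<psi>)"
    using d1 by (intro continuous_at_imp_continuous_on ballI differentiable_imp_continuous_within)
  have "bounded {x. \<psi> x \<noteq> 0}" using assms unfolding test_fun_def by blast
  then obtain B where B: "\<And>x. \<psi> x \<noteq> 0 \<Longrightarrow> \<bar>x\<bar> \<le> B" unfolding bounded_iff by auto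
  define R where "R = max B 0 + 1"
  have R: "R > 0" "B < R" unfolding R_def by auto
  show "\<exists>R>0. \<forall>x. R \<le> \<bar>x\<bar> \<longrightarrow> \<psi> x = 0 \<and> deriv \<psi> x = 0"
  proof (intro exI[of _ R] conjI allI impI)
    show "0 < R" using R by simp
  next
    fix x assume x: "R \<le> \<bar>x\<bar>"
    have z: "\<psi> y = 0" if "B < \<bar>y\<bar>" for y using B[of y] that by force
    then show "\<psi> x = 0" using x R by auto
    have "(\<psi> has_real_derivative 0) (at x)"
    proof (rule has_field_derivative_transform_within_open[OF DERIV_const[of 0], where S="{y. B < \<bar>y\<bar>}"])
      show "open {y. B < \<bar>y\<bar>}" by (intro open_Collect_less continuous_intros)
      show "x \<in> {y. B < \<bar>y\<bar>}" using x R by auto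
    qed (use z in auto)
    then show "deriv \<psi> x = 0" using D[of x] DERIV_unique by blast
  qed
qed

context wf_core begin

lemma dphi_has_int: "a \<le> b \<Longrightarrow> (dphi has_integral (phi b - phi a)) {a..b}"
  by (rule fundamental_theorem_of_calculus_interior_strong[OF Sx_fin])
     (use phi_der phi_cont in \<open>auto simp: has_real_derivative_iff_has_vector_derivative[symmetric]
       intro: continuous_on_subset\<close>)

lemma dphi_meas: "dphi \<in> borel_measurable borel"
  unfolding dphi_def[abs_def]
  by (intro borel_measurable_divide borel_measurable_continuous_onI zphi_cont Dphi_cont)

lemma dphi_abs: "dphi absolutely_integrable_on {a..b}"
proof (cases "a \<le> b")
  case True
  have i: "dphi integrable_on {a..b}" using dphi_has_int[OF True] by blast
  have "(\<lambda>x. - dphi x) integrable_on {a..b}" using i by (rule integrable_neg)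
  moreover have "(\<lambda>x. norm (dphi x)) = (\<lambda>x. - dphi x)"
  proof
    fix x show "norm (dphi x) = - dphi x" using dphi_le[of x] by simp
  qed
  ultimately show ?thesis using i absolutely_integrable_on_def by metis
qed simp

lemma dphi_loc: "loc_int dphi"
  unfolding loc_int_def using abs_to_lborel[OF dphi_meas dphi_abs] by auto

end

lemma lint_compact:
  fixes F :: "real \<Rightarrow> real"
  assumes si: "set_integrable lborel {a..b} F" and z: "\<And>x. x \<notin> {a..b} \<Longrightarrow> F x = 0"
  shows "(LINT x|lborel. F x) = integral {a..b} F"
proof -
  have "(LINT x|lborel. F x) = (LINT x|lborel. indicator {a..b} x *\<^sub>R F x)"
    by (rule Bochner_Integration.integral_cong) (use z in \<open>auto simp: indicator_def\<close>)
  also have "\<dots> = (LINT x:{a..b}|lborel. F x)" by (simp add: set_lebesgue_integral_def)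
  also have "\<dots> = integral {a..b} F" by (rule set_borel_integral_eq_integral(2)[OF si])
  finally show ?thesis .
qed

context wf_core begin

lemma weak_deriv:
  assumes tf: "test_fun \<psi>"
  shows "(LINT \<xi>|lborel. phi \<xi> * deriv \<psi> \<xi>) = - (LINT \<xi>|lborel. dphi \<xi> * \<psi> \<xi>)"
proof -
  note tp = test_props[OF tf]
  obtain R where R: "R > 0" "\<And>x. R \<le> \<bar>x\<bar> \<Longrightarrow> \<psi> x = 0 \<and> deriv \<psi> x = 0" using tp(4) by blast
  define a where "a = - R"
  define b where "b = R"
  have ab: "a \<le> b" using R unfolding a_def b_def by simp
  have out: "\<psi> x = 0 \<and> deriv \<psi> x = 0" if "x \<notin> {a..b}" for x
    using R(2)[of x] that unfolding a_def b_def by auto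
  have c1: "continuous_on {a..b} (\<lambda>x. phi x * deriv \<psi> x)"
    by (intro continuous_intros continuous_on_subset[OF phi_cont] continuous_on_subset[OF tp(3)]) auto
  have si1: "set_integrable lborel {a..b} (\<lambda>x. phi x * deriv \<psi> x)"
    by (rule borel_integrable_atLeastAtMost'[OF c1])
  have psi_meas: "\<psi> \<in> borel_measurable borel" by (rule borel_measurable_continuous_onI[OF tp(2)])
  have "(\<lambda>x. \<psi> x * dphi x) absolutely_integrable_on {a..b}"
  proof (rule absolutely_integrable_bounded_measurable_product_real)
    show "\<psi> \<in> borel_measurable (lebesgue_on {a..b})"
      by (rule continuous_imp_measurable_on_sets_lebesgue) (auto intro: continuous_on_subset[OF tp(2)])
    show "{a..b} \<in> sets lebesgue" by simp
    show "bounded (\<psi> ` {a..b})"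
      by (intro compact_imp_bounded compact_continuous_image continuous_on_subset[OF tp(2)]) auto
    show "dphi absolutely_integrable_on {a..b}" by (rule dphi_abs)
  qed
  then have "(\<lambda>x. dphi x * \<psi> x) absolutely_integrable_on {a..b}" by (simp add: mult.commute)
  then have si2: "set_integrable lborel {a..b} (\<lambda>x. dphi x * \<psi> x)"
    by (intro abs_to_lborel borel_measurable_times dphi_meas psi_meas) auto
  have i2: "(\<lambda>x. dphi x * \<psi> x) integrable_on {a..b}" using set_borel_integral_eq_integral(1)[OF si2] .
  have i1: "(\<lambda>x. phi x * deriv \<psi> x) integrable_on {a..b}" using set_borel_integral_eq_integral(1)[OF si1] .
  have "((\<lambda>x. dphi x * \<psi> x + phi x * deriv \<psi> x) has_integral (phi b * \<psi> b - phi a * \<psi> a)) {a..b}"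
  proof (rule fundamental_theorem_of_calculus_interior_strong[OF Sx_fin ab])
    fix x assume "x \<in> {a<..<b} - Sx"
    then have "x \<notin> Sx" by auto
    from DERIV_mult[OF phi_der[OF this] tp(1)[of x]]
    have "((\<lambda>x. phi x * \<psi> x) has_real_derivative dphi x * \<psi> x + phi x * deriv \<psi> x) (at x)"
      by (simp add: algebra_simps)
    then show "((\<lambda>x. phi x * \<psi> x) has_vector_derivative dphi x * \<psi> x + phi x * deriv \<psi> x) (at x)"
      by (simp add: has_real_derivative_iff_has_vector_derivative)
  next
    show "continuous_on {a..b} (\<lambda>x. phi x * \<psi> x)"
      by (intro continuous_intros continuous_on_subset[OF phi_cont] continuous_on_subset[OF tp(2)]) auto
  qed
  moreover have "\<psi> a = 0" "\<psi> b = 0" using R unfolding a_def b_def by auto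
  ultimately have "((\<lambda>x. dphi x * \<psi> x + phi x * deriv \<psi> x) has_integral 0) {a..b}" by simp
  then have "integral {a..b} (\<lambda>x. dphi x * \<psi> x + phi x * deriv \<psi> x) = 0" by (rule integral_unique)
  then have sum0: "integral {a..b} (\<lambda>x. dphi x * \<psi> x) + integral {a..b} (\<lambda>x. phi x * deriv \<psi> x) = 0"
    using integral_add[OF i2 i1] by simp
  have L1: "(LINT \<xi>|lborel. phi \<xi> * deriv \<psi> \<xi>) = integral {a..b} (\<lambda>x. phi x * deriv \<psi> x)"
    by (rule lint_compact[OF si1]) (use out in auto)
  have L2: "(LINT \<xi>|lborel. dphi \<xi> * \<psi> \<xi>) = integral {a..b} (\<lambda>x. dphi x * \<psi> x)"
    by (rule lint_compact[OF si2]) (use out in auto)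
  show ?thesis unfolding L1 L2 using sum0 by linarith
qed

lemma weak_eq:
  assumes tf: "test_fun \<psi>"
  shows "(LINT \<xi>|lborel. (D (phi \<xi>) * dphi \<xi> - f (phi \<xi>) + c * phi \<xi>) * deriv \<psi> \<xi>
                             - g (phi \<xi>) * \<psi> \<xi>) = 0"
proof -
  note tp = test_props[OF tf]
  obtain R where R: "R > 0" "\<And>x. R \<le> \<bar>x\<bar> \<Longrightarrow> \<psi> x = 0 \<and> deriv \<psi> x = 0" using tp(4) by blast
  define a where "a = - R"
  define b where "b = R"
  have ab: "a \<le> b" using R unfolding a_def b_def by simp
  have out: "\<psi> x = 0 \<and> deriv \<psi> x = 0" if "x \<notin> {a..b}" for x
    using R(2)[of x] that unfolding a_def b_def by auto
  define \<Phi> where "\<Phi> = (\<lambda>x. w x * deriv \<psi> x - g (phi x) * \<psi> x)"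
  have eq: "(\<lambda>\<xi>. (D (phi \<xi>) * dphi \<xi> - f (phi \<xi>) + c * phi \<xi>) * deriv \<psi> \<xi> - g (phi \<xi>) * \<psi> \<xi>) = \<Phi>"
    unfolding \<Phi>_def w_def D_dphi by simp
  have c1: "continuous_on {a..b} \<Phi>" unfolding \<Phi>_def
    by (intro continuous_intros continuous_on_subset[OF w_cont] continuous_on_subset[OF tp(3)]
        continuous_on_subset[OF gphi_cont] continuous_on_subset[OF tp(2)]) auto
  have si: "set_integrable lborel {a..b} \<Phi>" by (rule borel_integrable_atLeastAtMost'[OF c1])
  have "((\<lambda>x. - g (phi x) * \<psi> x + w x * deriv \<psi> x) has_integral (w b * \<psi> b - w a * \<psi> a)) {a..b}"
  proof (rule fundamental_theorem_of_calculus_interior_strong[OF Sx_fin ab])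
    fix x assume "x \<in> {a<..<b} - Sx"
    then have "x \<notin> Sx" by auto
    from DERIV_mult[OF w_der[OF this] tp(1)[of x]]
    have "((\<lambda>x. w x * \<psi> x) has_real_derivative - g (phi x) * \<psi> x + w x * deriv \<psi> x) (at x)"
      by (simp add: algebra_simps)
    then show "((\<lambda>x. w x * \<psi> x) has_vector_derivative - g (phi x) * \<psi> x + w x * deriv \<psi> x) (at x)"
      by (simp add: has_real_derivative_iff_has_vector_derivative)
  next
    show "continuous_on {a..b} (\<lambda>x. w x * \<psi> x)"
      by (intro continuous_intros continuous_on_subset[OF w_cont] continuous_on_subset[OF tp(2)]) auto
  qed
  moreover have "\<psi> a = 0" "\<psi> b = 0" using R unfolding a_def b_def by auto
  ultimately have "(\<Phi> has_integral 0) {a..b}" unfolding \<Phi>_def by (simp add: algebra_simps)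
  then have "integral {a..b} \<Phi> = 0" by (rule integral_unique)
  moreover have "(LINT \<xi>|lborel. \<Phi> \<xi>) = integral {a..b} \<Phi>"
    by (rule lint_compact[OF si]) (use out in \<open>auto simp: \<Phi>_def\<close>)
  ultimately show ?thesis unfolding eq by simp
qed

lemma wavefront_phi: "wavefront D f g c phi"
  unfolding wavefront_def tw_profile_def
proof (intro conjI exI[of _ dphi] allI impI)
  show "continuous_on UNIV phi" by (rule phi_cont)
  show "phi \<xi> \<in> {0..1}" for \<xi> by (rule phi_01)
  show "loc_int dphi" by (rule dphi_loc)
  show "(LINT \<xi>|lborel. phi \<xi> * deriv \<psi> \<xi>) = - (LINT \<xi>|lborel. dphi \<xi> * \<psi> \<xi>)" if "test_fun \<psi>" for \<psi>
    using weak_deriv[OF that] .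
  show "loc_int (\<lambda>\<xi>. D (phi \<xi>) * dphi \<xi>)"
    unfolding D_dphi loc_int_def
    by (intro allI borel_integrable_atLeastAtMost' continuous_on_subset[OF zphi_cont]) auto
  show "(LINT \<xi>|lborel. (D (phi \<xi>) * dphi \<xi> - f (phi \<xi>) + c * phi \<xi>) * deriv \<psi> \<xi> - g (phi \<xi>) * \<psi> \<xi>) = 0"
    if "test_fun \<psi>" for \<psi> using weak_eq[OF that] .
  show "mono phi \<or> antimono phi"
    using phi_antimono by (auto intro: antimonoI)
  have "eventually (\<lambda>x. phi x > 1/2) at_bot" using order_tendstoD(1)[OF phi_bot, of "1/2"] by simp
  then obtain x where x: "phi x > 1/2" using eventually_happens'[OF trivial_limit_at_bot_linorder] by blast
  have "eventually (\<lambda>x. phi x < 1/2) at_top" using order_tendstoD(2)[OF phi_top, of "1/2"] by simp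
  then obtain y where y: "phi y < 1/2" using eventually_happens'[OF trivial_limit_at_top_linorder] by blast
  show "\<exists>x y. phi x \<noteq> phi y" using x y by (intro exI[of _ x] exI[of _ y]) simp
qed

lemma main_core: "\<exists>\<phi>. wavefront D f g c \<phi> \<and> (\<phi> \<longlongrightarrow> 1) at_bot \<and> (\<phi> \<longlongrightarrow> 0) at_top"
  using wavefront_phi phi_bot phi_top by blast

end

lemma kint_from_local:
  fixes F :: "real \<Rightarrow> real"
  assumes loc: "\<And>x. x \<in> {0<..<1} \<Longrightarrow> \<exists>\<delta>>0. F integrable_on {x-\<delta>..x+\<delta>}"
    and ab: "0 < a" "b < 1"
  shows "F integrable_on {a..b}"
proof -
  have "F integrable_on cbox a b"
  proof (rule integrable_on_little_subintervals, rule ballI)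
    fix x assume "x \<in> cbox a b"
    then have "x \<in> {0<..<1}" using ab by auto
    then obtain \<delta> where \<delta>: "\<delta> > 0" "F integrable_on {x-\<delta>..x+\<delta>}" using loc by blast
    show "\<exists>d>0. \<forall>u v. x \<in> cbox u v \<and> cbox u v \<subseteq> ball x d \<and> cbox u v \<subseteq> cbox a b \<longrightarrow> F integrable_on cbox u v"
    proof (intro exI[of _ \<delta>] conjI allI impI)
      fix u v assume uv: "x \<in> cbox u v \<and> cbox u v \<subseteq> ball x \<delta> \<and> cbox u v \<subseteq> cbox a b"
      have "ball x \<delta> \<subseteq> cbox (x-\<delta>) (x+\<delta>)" by (auto simp: dist_real_def)
      then have "cbox u v \<subseteq> cbox (x-\<delta>) (x+\<delta>)" using uv by blast
      then show "F integrable_on cbox u v" using integrable_on_subcbox \<delta>(2) by (metis cbox_interval)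
    qed (use \<delta> in auto)
  qed
  then show ?thesis by (simp add: cbox_interval)
qed

lemma local_combine:
  fixes F :: "real \<Rightarrow> real"
  assumes "\<delta>1 > 0" "F integrable_on {x-\<delta>1..x}" "\<delta>2 > 0" "F integrable_on {x..x+\<delta>2}"
  shows "\<exists>\<delta>>0. F integrable_on {x-\<delta>..x+\<delta>}"
proof -
  define \<delta> where "\<delta> = min \<delta>1 \<delta>2"
  have d: "\<delta> > 0" "\<delta> \<le> \<delta>1" "\<delta> \<le> \<delta>2" using assms unfolding \<delta>_def by auto
  have "F integrable_on {x-\<delta>..x}" by (rule integrable_on_subinterval[OF assms(2)]) (use d in auto)
  moreover have "F integrable_on {x..x+\<delta>}" by (rule integrable_on_subinterval[OF assms(4)]) (use d in auto)
  ultimately have "F integrable_on {x-\<delta>..x+\<delta>}" using Henstock_Kurzweil_Integration.integrable_combine[where a="x-\<delta>" and c=x and b="x+\<delta>" and f=F] d by auto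
  then show ?thesis using d by blast
qed

lemma avoid_fin:
  fixes E :: "real set"
  assumes "finite E" "x \<in> {0<..<1} - E"
  shows "\<exists>\<delta>>0. {x-\<delta>..x+\<delta>} \<subseteq> {0<..<1} - E"
proof -
  obtain e where e: "e > 0" "\<forall>w\<in>ball x e. w \<in> UNIV \<and> (w \<noteq> x \<longrightarrow> w \<notin> E)"
    using finite_ball_avoid[OF open_UNIV assms(1), of x] by auto
  define \<delta> where "\<delta> = min (e/2) (min (x/2) ((1-x)/2))"
  have "(1-x)/2 < 1 - x" "x/2 < x" "e/2 < e" "0 < (1-x)/2" "0 < x/2" "0 < e/2" using e assms by auto
  then have d: "\<delta> > 0" "\<delta> < e" "\<delta> < x" "\<delta> < 1 - x" unfolding \<delta>_def by (auto simp: min_less_iff_disj)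
  have "{x-\<delta>..x+\<delta>} \<subseteq> {0<..<1} - E"
  proof
    fix w assume w: "w \<in> {x-\<delta>..x+\<delta>}"
    then have "w \<in> ball x e" using d by (auto simp: dist_real_def)
    then have "w \<notin> E" using e assms by auto
    then show "w \<in> {0<..<1} - E" using w d by auto
  qed
  then show ?thesis using d by blast
qed

lemma S1_at:
  fixes z z' h D g :: "real \<Rightarrow> real" and c e :: real
  assumes e: "0 < e" "e < 1" and ge: "g e \<noteq> 0"
    and gc: "continuous_on {0..1} g" and zc: "continuous_on {0..1} z"
    and hc: "continuous_on {0..1} h" and Dc: "continuous_on {0..1} D"
    and pn: "\<exists>\<rho>>0. \<forall>x. 0 < \<bar>x - e\<bar> \<and> \<bar>x - e\<bar> < \<rho> \<longrightarrow>
        (z has_real_derivative z' x) (at x) \<and> z' x = h x - c - D x * g x / z x \<and> z x \<noteq> 0 \<and> D x / z x \<le> 0"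
  shows "\<exists>\<delta>>0. (\<lambda>x. D x / z x) integrable_on {e-\<delta>..e+\<delta>}"
proof -
  obtain \<rho> where \<rho>: "\<rho> > 0" "\<And>x. 0 < \<bar>x - e\<bar> \<Longrightarrow> \<bar>x - e\<bar> < \<rho> \<Longrightarrow>
        (z has_real_derivative z' x) (at x) \<and> z' x = h x - c - D x * g x / z x \<and> z x \<noteq> 0 \<and> D x / z x \<le> 0"
    using pn by blast
  have gi: "isCont g e" using continuous_on_interior[OF gc, of e] e by auto
  obtain g0 \<epsilon>1 where g0: "g0 > 0" "\<epsilon>1 > 0"
      and gb: "(\<forall>x. \<bar>x - e\<bar> < \<epsilon>1 \<longrightarrow> g x \<ge> g0) \<or> (\<forall>x. \<bar>x - e\<bar> < \<epsilon>1 \<longrightarrow> g x \<le> - g0)"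
  proof (cases "g e > 0")
    case True
    obtain \<epsilon>1 where "\<epsilon>1 > 0" "\<forall>x. \<bar>x - e\<bar> < \<epsilon>1 \<longrightarrow> g x > g e / 2"
      using local_greater[OF gi, of "g e / 2"] True by auto
    then show ?thesis using that[of "g e / 2" \<epsilon>1] True by force
  next
    case False
    then have "g e < 0" using ge by simp
    obtain \<epsilon>1 where "\<epsilon>1 > 0" "\<forall>x. \<bar>x - e\<bar> < \<epsilon>1 \<longrightarrow> g x < g e / 2"
      using local_less[OF gi, of "g e / 2"] \<open>g e < 0\<close> by auto
    then show ?thesis using that[of "- g e / 2" \<epsilon>1] \<open>g e < 0\<close> by force
  qed
  define \<delta> where "\<delta> = min (\<rho>/2) (min (\<epsilon>1/2) (min (e/2) ((1-e)/2)))"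
  have "(1-e)/2 < 1 - e" "e/2 < e" "\<rho>/2 < \<rho>" "\<epsilon>1/2 < \<epsilon>1" "0 < (1-e)/2" "0 < e/2" "0 < \<rho>/2" "0 < \<epsilon>1/2"
    using \<rho> g0 e by auto
  then have d: "\<delta> > 0" "\<delta> < \<rho>" "\<delta> < \<epsilon>1" "\<delta> < e" "\<delta> < 1 - e" unfolding \<delta>_def
    by (auto simp: min_less_iff_disj)
  have sub: "{e-\<delta>..e+\<delta>} \<subseteq> {0..1}" using d by auto
  have gbI: "(\<forall>x\<in>{e-\<delta>..e+\<delta>}. g x \<ge> g0) \<or> (\<forall>x\<in>{e-\<delta>..e+\<delta>}. g x \<le> - g0)"
  proof -
    have "\<bar>x - e\<bar> < \<epsilon>1" if "x \<in> {e-\<delta>..e+\<delta>}" for x using that d by auto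
    then show ?thesis using gb by blast
  qed
  have Hx: "(z has_real_derivative z' x) (at x) \<and> z' x = h x - c - D x * g x / z x \<and> z x \<noteq> 0 \<and> D x / z x \<le> 0"
    if "x \<in> {e-\<delta>..e+\<delta>}" "x \<noteq> e" for x
  proof -
    have "\<bar>x - e\<bar> < \<rho>" "0 < \<bar>x - e\<bar>" using that d by (auto simp: abs_if)
    then show ?thesis using \<rho>(2)[of x] by blast
  qed
  have zc': "continuous_on {a..b} z" "continuous_on {a..b} h" "continuous_on {a..b} D"
    if "{a..b} \<subseteq> {0..1}" for a b
    using continuous_on_subset[OF zc that] continuous_on_subset[OF hc that] continuous_on_subset[OF Dc that] by auto
  have L: "(\<lambda>x. D x / z x) integrable_on {e-\<delta>..e}"
  proof (rule S1[where z'=z' and h=h and c=c and g=g and gmin=g0])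
    show "(\<forall>x\<in>{e-\<delta>..e}. g0 \<le> g x) \<or> (\<forall>x\<in>{e-\<delta>..e}. g x \<le> - g0)" using gbI by auto
    show "e-\<delta> \<le> e" using d by simp
    have "{e-\<delta>..e} \<subseteq> {0..1}" using sub by auto
    then show "continuous_on {e-\<delta>..e} z" "continuous_on {e-\<delta>..e} h" "continuous_on {e-\<delta>..e} D"
      using zc' by auto
    show "0 < g0" by (rule g0(1))
    fix x assume x: "x \<in> {e-\<delta><..<e}"
    then have hx: "x \<in> {e-\<delta>..e+\<delta>}" "x \<noteq> e" by auto
    from Hx[OF hx] show "(z has_real_derivative z' x) (at x)" "z' x = h x - c - D x * g x / z x"
      "z x \<noteq> 0" "D x / z x \<le> 0" by auto
  qed
  have R: "(\<lambda>x. D x / z x) integrable_on {e..e+\<delta>}"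
  proof (rule S1[where z'=z' and h=h and c=c and g=g and gmin=g0])
    show "(\<forall>x\<in>{e..e+\<delta>}. g0 \<le> g x) \<or> (\<forall>x\<in>{e..e+\<delta>}. g x \<le> - g0)" using gbI by auto
    show "e \<le> e+\<delta>" using d by simp
    have "{e..e+\<delta>} \<subseteq> {0..1}" using sub by auto
    then show "continuous_on {e..e+\<delta>} z" "continuous_on {e..e+\<delta>} h" "continuous_on {e..e+\<delta>} D"
      using zc' by auto
    show "0 < g0" by (rule g0(1))
    fix x assume x: "x \<in> {e<..<e+\<delta>}"
    then have hx: "x \<in> {e-\<delta>..e+\<delta>}" "x \<noteq> e" by auto
    from Hx[OF hx] show "(z has_real_derivative z' x) (at x)" "z' x = h x - c - D x * g x / z x"
      "z x \<noteq> 0" "D x / z x \<le> 0" by auto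
  qed
  show ?thesis by (rule local_combine[OF d(1) L d(1) R])
qed

locale prop_setting =
  fixes f h D g :: "real \<Rightarrow> real" and \<alpha> \<gamma> c :: real
  assumes f_C1: "\<forall>u\<in>{0..1}. (f has_real_derivative h u) (at u within {0..1})"
      and h_cont: "continuous_on {0..1} h"
      and D_C1: "\<exists>D'. (\<forall>u\<in>{0..1}. (D has_real_derivative D' u) (at u within {0..1}))
                      \<and> continuous_on {0..1} D'"
      and \<alpha>: "0 < \<alpha>" "\<alpha> < 1"
      and D_pos: "\<forall>u. 0 < u \<and> u < \<alpha> \<longrightarrow> D u > 0"
      and D_neg: "\<forall>u. \<alpha> < u \<and> u < 1 \<longrightarrow> D u < 0"
      and g_cont: "continuous_on {0..1} g"
      and \<gamma>: "0 < \<gamma>" "\<gamma> < 1"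
      and g_neg: "\<forall>u. 0 < u \<and> u < \<gamma> \<longrightarrow> g u < 0"
      and g_pos: "\<forall>u. \<gamma> < u \<and> u < 1 \<longrightarrow> g u > 0"
      and g_zeros: "g 0 = 0" "g \<gamma> = 0" "g 1 = 0"
begin

definition D' where "D' = (SOME D'. (\<forall>u\<in>{0..1}. (D has_real_derivative D' u) (at u within {0..1}))
                      \<and> continuous_on {0..1} D')"

lemma D'_prop: "(\<forall>u\<in>{0..1}. (D has_real_derivative D' u) (at u within {0..1})) \<and> continuous_on {0..1} D'"
  unfolding D'_def using someI_ex[OF D_C1] .

lemma Dc: "continuous_on {0..1} D"
  by (rule DERIV_continuous_on) (use D'_prop in auto)

lemma Dat: "u \<in> {0<..<1} \<Longrightarrow> (D has_real_derivative D' u) (at u)"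
proof -
  assume u: "u \<in> {0<..<1}"
  then have "(D has_real_derivative D' u) (at u within {0..1})" using D'_prop by auto
  then show ?thesis using at_within_Icc_at[of 0 u 1] u by auto
qed

lemma K_ex: "\<exists>K>0. \<forall>u\<in>{0..1}. \<bar>D' u\<bar> \<le> K" using cont_bound D'_prop by blast

lemma M_ex: "\<exists>M>0. \<forall>u\<in>{0..1}. \<bar>h u - c\<bar> \<le> M"
proof -
  have "continuous_on {0..1} (\<lambda>u. h u - c)" by (intro continuous_intros h_cont)
  from cont_bound[OF this] show ?thesis .
qed

lemma Dm_ex: "\<exists>Dm>0. \<forall>u\<in>{0..1}. \<bar>D u\<bar> \<le> Dm" using cont_bound Dc by blast

lemma D_isCont: "u \<in> {0<..<1} \<Longrightarrow> isCont D u"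
  using continuous_on_interior[OF Dc, of u] by auto

lemma g_isCont: "u \<in> {0<..<1} \<Longrightarrow> isCont g u"
  using continuous_on_interior[OF g_cont, of u] by auto

lemma D_alpha: "D \<alpha> = 0"
proof (rule ccontr)
  assume "D \<alpha> \<noteq> 0"
  then consider "D \<alpha> > 0" | "D \<alpha> < 0" by linarith
  then show False
  proof cases
    case 1
    obtain e where e: "e > 0" "\<forall>x. \<bar>x - \<alpha>\<bar> < e \<longrightarrow> D x > 0"
      using local_greater[OF D_isCont[of \<alpha>] 1] \<alpha> by auto
    define m where "m = min (e/2) ((1-\<alpha>)/2)"
    have m1: "m \<le> e/2" unfolding m_def by (rule min.cobounded1)
    have m2: "m \<le> (1-\<alpha>)/2" unfolding m_def by (rule min.cobounded2)
    have m0: "0 < m" using e \<alpha> unfolding m_def by simp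
    note m = m0 m1 m2
    have "e/2 < e" "(1-\<alpha>)/2 < 1 - \<alpha>" using e \<alpha> by auto
    define x where "x = \<alpha> + m"
    have "\<alpha> < x" "x < 1" "\<bar>x - \<alpha>\<bar> < e" using m \<open>e/2 < e\<close> \<open>(1-\<alpha>)/2 < 1 - \<alpha>\<close> unfolding x_def by auto
    then have "D x > 0" "D x < 0" using e D_neg by auto
    then show False by simp
  next
    case 2
    obtain e where e: "e > 0" "\<forall>x. \<bar>x - \<alpha>\<bar> < e \<longrightarrow> D x < 0"
      using local_less[OF D_isCont[of \<alpha>] 2] \<alpha> by auto
    define m where "m = min (e/2) (\<alpha>/2)"
    have m1: "m \<le> e/2" unfolding m_def by (rule min.cobounded1)
    have m2: "m \<le> \<alpha>/2" unfolding m_def by (rule min.cobounded2)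
    have m0: "0 < m" using e \<alpha> unfolding m_def by simp
    note m = m0 m1 m2
    have "e/2 < e" "\<alpha>/2 < \<alpha>" using e \<alpha> by auto
    define x where "x = \<alpha> - m"
    have "0 < x" "x < \<alpha>" "\<bar>x - \<alpha>\<bar> < e" using m \<open>e/2 < e\<close> \<open>\<alpha>/2 < \<alpha>\<close> unfolding x_def by auto
    then have "D x < 0" "D x > 0" using e D_pos by auto
    then show False by simp
  qed
qed

lemma kint_gen:
  fixes z :: "real \<Rightarrow> real" and E :: "real set"
  assumes E: "finite E" and zc: "continuous_on {0..1} z"
    and znz: "\<And>u. u \<in> {0<..<1} - E \<Longrightarrow> z u \<noteq> 0"
    and sing: "\<And>x. x \<in> E \<Longrightarrow> \<exists>\<delta>>0. (\<lambda>u. D u / z u) integrable_on {x-\<delta>..x+\<delta>}"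
    and ab: "0 < a" "b < 1"
  shows "(\<lambda>u. D u / z u) integrable_on {a..b}"
proof (rule kint_from_local[OF _ ab])
  fix x :: real assume x: "x \<in> {0<..<1}"
  show "\<exists>\<delta>>0. (\<lambda>u. D u / z u) integrable_on {x-\<delta>..x+\<delta>}"
  proof (cases "x \<in> E")
    case True then show ?thesis by (rule sing)
  next
    case False
    then obtain \<delta> where \<delta>: "\<delta> > 0" "{x-\<delta>..x+\<delta>} \<subseteq> {0<..<1} - E" using avoid_fin[OF E, of x] x by auto
    have "x - \<delta> \<in> {x-\<delta>..x+\<delta>}" "x + \<delta> \<in> {x-\<delta>..x+\<delta>}" using \<delta> by auto
    then have "x - \<delta> \<in> {0<..<1}" "x + \<delta> \<in> {0<..<1}" using \<delta> by blast+
    then have sub: "{x-\<delta>..x+\<delta>} \<subseteq> {0..1}" by auto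
    have "continuous_on {x-\<delta>..x+\<delta>} (\<lambda>u. D u / z u)"
      by (intro continuous_on_divide continuous_on_subset[OF zc sub] continuous_on_subset[OF Dc sub])
         (use \<delta> znz in auto)
    then show ?thesis using \<delta> integrable_continuous_real by blast
  qed
qed

end

context prop_setting begin

lemma caseA:
  fixes z z' :: "real \<Rightarrow> real"
  assumes zc: "continuous_on {0..1} z"
   and zd: "\<forall>u\<in>{0<..<1} - {\<alpha>}. (z has_real_derivative z' u) (at u)"
   and ode: "\<forall>u\<in>{0<..<1} - {\<alpha>}. z' u = h u - c - D u * g u / z u"
   and zneg: "\<forall>u. 0 < u \<and> u < \<alpha> \<longrightarrow> z u < 0"
   and zpos: "\<forall>u. \<alpha> < u \<and> u < 1 \<longrightarrow> z u > 0"
   and z0: "z 0 = 0" "z \<alpha> = 0" "z 1 = 0"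
   and sing: "\<exists>\<delta>>0. (\<lambda>u. D u / z u) integrable_on {\<alpha>-\<delta>..\<alpha>+\<delta>}"
  shows "\<exists>\<phi>. wavefront D f g c \<phi> \<and> (\<phi> \<longlongrightarrow> 1) at_bot \<and> (\<phi> \<longlongrightarrow> 0) at_top"
proof -
  have znz: "z u \<noteq> 0" if "u \<in> {0<..<1} - {\<alpha>}" for u
  proof (cases "u < \<alpha>")
    case True then show ?thesis using zneg that by force
  next
    case False then have "\<alpha> < u" using that by auto
    then show ?thesis using zpos that by force
  qed
  interpret W: wf_core f h D g z z' \<alpha> c "{\<alpha>}"
  proof
    show "\<forall>u\<in>{0..1}. (f has_real_derivative h u) (at u within {0..1})" by (rule f_C1)
    show "0 < \<alpha>" "\<alpha> < 1" by (rule \<alpha>)+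
    show "\<forall>u. 0 < u \<and> u < \<alpha> \<longrightarrow> D u > 0" by (rule D_pos)
    show "\<forall>u. \<alpha> < u \<and> u < 1 \<longrightarrow> D u < 0" by (rule D_neg)
    show "continuous_on {0..1} D" by (rule Dc)
    show "continuous_on {0..1} g" by (rule g_cont)
    show "g 0 = 0" "g 1 = 0" using g_zeros by auto
    show "finite {\<alpha>}" by simp
    show "{\<alpha>} \<subseteq> {0<..<1}" using \<alpha> by auto
    show "\<alpha> \<in> {\<alpha>}" by simp
    show "continuous_on {0..1} z" by (rule zc)
    show "\<And>u. u \<in> {0<..<1} - {\<alpha>} \<Longrightarrow> (z has_real_derivative z' u) (at u)" using zd by auto
    show "\<And>u. u \<in> {0<..<1} - {\<alpha>} \<Longrightarrow> z' u = h u - c - D u * g u / z u" using ode by auto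
    show "\<And>u. u \<in> {0<..<1} - {\<alpha>} \<Longrightarrow> z u \<noteq> 0" by (rule znz)
    show "z 0 = 0" "z 1 = 0" using z0 by auto
    show "\<And>u. u \<in> {\<alpha>} \<Longrightarrow> z u = 0" using z0 by auto
    show "D u / z u \<le> 0" if u01: "u \<in> {0..1}" for u
    proof -
      consider "u = 0" | "u = 1" | "u = \<alpha>" | "0 < u \<and> u < \<alpha>" | "\<alpha> < u \<and> u < 1" using u01 by fastforce
      then show ?thesis
      proof cases
        case 4 then have "D u > 0" "z u < 0" using D_pos zneg by auto
        then show ?thesis by (simp add: divide_pos_neg less_imp_le)
      next
        case 5 then have "D u < 0" "z u > 0" using D_neg zpos by auto
        then show ?thesis by (simp add: divide_neg_pos less_imp_le)
      qed (use z0 in auto)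
    qed
    show "(\<lambda>u. D u / z u) integrable_on {a..b}" if "0 < a" "b < 1" for a b
      by (rule kint_gen[where E="{\<alpha>}"]) (use zc znz sing that in auto)
  qed
  show ?thesis by (rule W.main_core)
qed

lemma caseB:
  fixes z z' :: "real \<Rightarrow> real"
  assumes \<alpha>\<gamma>: "\<alpha> < \<gamma>"
   and zc: "continuous_on {0..1} z"
   and zd: "\<forall>u\<in>{0<..<1} - {\<alpha>, \<gamma>}. (z has_real_derivative z' u) (at u)"
   and ode: "\<forall>u\<in>{0<..<1} - {\<alpha>, \<gamma>}. z' u = h u - c - D u * g u / z u"
   and zneg: "\<forall>u. 0 < u \<and> u < \<alpha> \<longrightarrow> z u < 0"
   and zpos: "\<forall>u. \<alpha> < u \<and> u < 1 \<and> u \<noteq> \<gamma> \<longrightarrow> z u > 0"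
   and z0: "z 0 = 0" "z \<alpha> = 0" "z 1 = 0" "z \<gamma> = 0"
   and sing: "\<And>e. e \<in> {\<alpha>, \<gamma>} \<Longrightarrow> \<exists>\<delta>>0. (\<lambda>u. D u / z u) integrable_on {e-\<delta>..e+\<delta>}"
  shows "\<exists>\<phi>. wavefront D f g c \<phi> \<and> (\<phi> \<longlongrightarrow> 1) at_bot \<and> (\<phi> \<longlongrightarrow> 0) at_top"
proof -
  have znz: "z u \<noteq> 0" if "u \<in> {0<..<1} - {\<alpha>, \<gamma>}" for u
  proof (cases "u < \<alpha>")
    case True then show ?thesis using zneg that by force
  next
    case False then have "\<alpha> < u" using that by auto
    then show ?thesis using zpos that by force
  qed
  interpret W: wf_core f h D g z z' \<alpha> c "{\<alpha>, \<gamma>}"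
  proof
    show "\<forall>u\<in>{0..1}. (f has_real_derivative h u) (at u within {0..1})" by (rule f_C1)
    show "0 < \<alpha>" "\<alpha> < 1" by (rule \<alpha>)+
    show "\<forall>u. 0 < u \<and> u < \<alpha> \<longrightarrow> D u > 0" by (rule D_pos)
    show "\<forall>u. \<alpha> < u \<and> u < 1 \<longrightarrow> D u < 0" by (rule D_neg)
    show "continuous_on {0..1} D" by (rule Dc)
    show "continuous_on {0..1} g" by (rule g_cont)
    show "g 0 = 0" "g 1 = 0" using g_zeros by auto
    show "finite {\<alpha>, \<gamma>}" by simp
    show "{\<alpha>, \<gamma>} \<subseteq> {0<..<1}" using \<alpha> \<gamma> by auto
    show "\<alpha> \<in> {\<alpha>, \<gamma>}" by simp
    show "continuous_on {0..1} z" by (rule zc)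
    show "\<And>u. u \<in> {0<..<1} - {\<alpha>, \<gamma>} \<Longrightarrow> (z has_real_derivative z' u) (at u)" using zd by auto
    show "\<And>u. u \<in> {0<..<1} - {\<alpha>, \<gamma>} \<Longrightarrow> z' u = h u - c - D u * g u / z u" using ode by auto
    show "\<And>u. u \<in> {0<..<1} - {\<alpha>, \<gamma>} \<Longrightarrow> z u \<noteq> 0" by (rule znz)
    show "z 0 = 0" "z 1 = 0" using z0 by auto
    show "\<And>u. u \<in> {\<alpha>, \<gamma>} \<Longrightarrow> z u = 0" using z0 by auto
    show "D u / z u \<le> 0" if u01: "u \<in> {0..1}" for u
    proof (cases "z u = 0")
      case True then show ?thesis by simp
    next
      case False
      then have "u \<noteq> 0" "u \<noteq> 1" "u \<noteq> \<alpha>" "u \<noteq> \<gamma>" using z0 by auto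
      then consider "0 < u \<and> u < \<alpha>" | "\<alpha> < u \<and> u < 1 \<and> u \<noteq> \<gamma>" using u01 by fastforce
      then show ?thesis
      proof cases
        case 1 then have "D u > 0" "z u < 0" using D_pos zneg by auto
        then show ?thesis by (simp add: divide_pos_neg less_imp_le)
      next
        case 2 then have "D u < 0" "z u > 0" using D_neg zpos by auto
        then show ?thesis by (simp add: divide_neg_pos less_imp_le)
      qed
    qed
    show "(\<lambda>u. D u / z u) integrable_on {a..b}" if "0 < a" "b < 1" for a b
      by (rule kint_gen[where E="{\<alpha>, \<gamma>}"]) (use zc znz sing that in auto)
  qed
  show ?thesis by (rule W.main_core)
qed

end

context prop_setting begin

lemma sing_alpha:
  fixes z z' :: "real \<Rightarrow> real"
  assumes ne: "\<alpha> \<noteq> \<gamma>" and zc: "continuous_on {0..1} z"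
    and H: "\<And>u. u \<in> {0<..<1} - {\<alpha>, \<gamma>} \<Longrightarrow> (z has_real_derivative z' u) (at u)
       \<and> z' u = h u - c - D u * g u / z u \<and> z u \<noteq> 0 \<and> D u / z u \<le> 0"
  shows "\<exists>\<delta>>0. (\<lambda>u. D u / z u) integrable_on {\<alpha>-\<delta>..\<alpha>+\<delta>}"
proof (rule S1_at[where z'=z' and h=h and c=c and g=g])
  show "0 < \<alpha>" "\<alpha> < 1" by (rule \<alpha>)+
  show "g \<alpha> \<noteq> 0"
  proof (cases "\<alpha> < \<gamma>")
    case True then show ?thesis using g_neg \<alpha> by force
  next
    case False then have "\<gamma> < \<alpha>" using ne by simp
    then show ?thesis using g_pos \<alpha> by force
  qed
  show "continuous_on {0..1} g" "continuous_on {0..1} z" "continuous_on {0..1} h" "continuous_on {0..1} D"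
    by (rule g_cont zc h_cont Dc)+
  define \<rho> where "\<rho> = min \<alpha> (min (1 - \<alpha>) \<bar>\<gamma> - \<alpha>\<bar>)"
  have \<rho>: "\<rho> > 0" "\<rho> \<le> \<alpha>" "\<rho> \<le> 1 - \<alpha>" "\<rho> \<le> \<bar>\<gamma> - \<alpha>\<bar>" using \<alpha> ne unfolding \<rho>_def by auto
  show "\<exists>\<rho>>0. \<forall>x. 0 < \<bar>x - \<alpha>\<bar> \<and> \<bar>x - \<alpha>\<bar> < \<rho> \<longrightarrow>
        (z has_real_derivative z' x) (at x) \<and> z' x = h x - c - D x * g x / z x \<and> z x \<noteq> 0 \<and> D x / z x \<le> 0"
  proof -
    have "(z has_real_derivative z' x) (at x) \<and> z' x = h x - c - D x * g x / z x \<and> z x \<noteq> 0 \<and> D x / z x \<le> 0"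
      if x: "0 < \<bar>x - \<alpha>\<bar> \<and> \<bar>x - \<alpha>\<bar> < \<rho>" for x
    proof -
      have "x \<in> {0<..<1} - {\<alpha>, \<gamma>}" using x \<rho> by (auto simp: abs_if split: if_splits)
      from H[OF this] show ?thesis .
    qed
    then show ?thesis using \<rho>(1) by blast
  qed
qed

lemma holder_get:
  assumes "holder_below g \<gamma>"
  obtains L \<tau> \<delta> where "L > 0" "0 < \<tau>" "\<tau> < 1" "\<delta> > 0"
    "\<And>u. u \<in> {0..1} \<Longrightarrow> \<bar>u - \<gamma>\<bar> < \<delta> \<Longrightarrow> \<bar>g u\<bar> \<ge> L * \<bar>u - \<gamma>\<bar> powr \<tau>"
  using assms unfolding holder_below_def by blast

lemma sing_eq:
  fixes z z' :: "real \<Rightarrow> real"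
  assumes eq: "\<alpha> = \<gamma>" and hb: "holder_below g \<gamma>" and zc: "continuous_on {0..1} z"
    and Hl: "\<And>u. u \<in> {0<..<\<alpha>} \<Longrightarrow> (z has_real_derivative z' u) (at u)
       \<and> z' u = h u - c - D u * g u / z u \<and> z u < 0"
    and Hr: "\<And>u. u \<in> {\<alpha><..<1} \<Longrightarrow> (z has_real_derivative z' u) (at u)
       \<and> z' u = h u - c - D u * g u / z u \<and> z u > 0"
  shows "\<exists>\<delta>>0. (\<lambda>u. D u / z u) integrable_on {\<alpha>-\<delta>..\<alpha>+\<delta>}"
proof -
  obtain L \<tau> \<delta>h where hol: "L > 0" "0 < \<tau>" "\<tau> < 1" "\<delta>h > 0"
    "\<And>u. u \<in> {0..1} \<Longrightarrow> \<bar>u - \<gamma>\<bar> < \<delta>h \<Longrightarrow> \<bar>g u\<bar> \<ge> L * \<bar>u - \<gamma>\<bar> powr \<tau>"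
    using holder_get[OF hb] by blast
  obtain K where K: "K > 0" "\<forall>u\<in>{0..1}. \<bar>D' u\<bar> \<le> K" using K_ex by blast
  obtain M where M: "M > 0" "\<forall>u\<in>{0..1}. \<bar>h u - c\<bar> \<le> M" using M_ex by blast
  define \<epsilon> where "\<epsilon> = min (1/2) (min (\<alpha>/2) (min ((1-\<alpha>)/2) (\<delta>h/2)))"
  have e1: "\<epsilon> \<le> 1/2" "\<epsilon> \<le> \<alpha>/2" "\<epsilon> \<le> (1-\<alpha>)/2" "\<epsilon> \<le> \<delta>h/2" unfolding \<epsilon>_def
    by (meson min.cobounded1 min.cobounded2 order_trans)+
  have e0: "\<epsilon> > 0" unfolding \<epsilon>_def using \<alpha> hol by auto
  have h2: "\<alpha>/2 < \<alpha>" "(1-\<alpha>)/2 < 1-\<alpha>" "\<delta>h/2 < \<delta>h" using \<alpha> hol by auto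
  have eps: "0 < \<epsilon>" "\<epsilon> \<le> 1" "\<epsilon> < \<alpha>" "\<epsilon> < 1 - \<alpha>" "\<epsilon> < \<delta>h" using e0 e1 h2 by linarith+
  have left: "(\<lambda>x. D x / z x) integrable_on {\<alpha>-\<epsilon>..\<alpha>}"
  proof (rule S2[where z'=z' and h=h and c=c and g=g and D'=D' and L=L and \<tau>=\<tau> and M=M and K=K])
    show "0 < \<epsilon>" "\<epsilon> \<le> 1" "0 < L" "0 < \<tau>" "\<tau> < 1" "0 \<le> M" "0 \<le> K" using eps hol M K by auto
    fix x assume x: "x \<in> {\<alpha>-\<epsilon>..<\<alpha>}"
    then have x0: "x \<in> {0<..<\<alpha>}" "x \<in> {0..1}" "x \<in> {0<..<1}" using eps \<alpha> by auto
    have "\<bar>x - \<gamma>\<bar> < \<delta>h" using x eps eq by auto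
    then have "\<bar>g x\<bar> \<ge> L * \<bar>x - \<gamma>\<bar> powr \<tau>" using hol(5) x0 by blast
    moreover have "g x < 0" using g_neg x0 eq by auto
    moreover have "\<bar>x - \<gamma>\<bar> = \<alpha> - x" using x eq by auto
    ultimately have gx: "- g x \<ge> L * (\<alpha> - x) powr \<tau>" by simp
    show "(z has_real_derivative z' x) (at x) \<and> z' x = h x - c - D x * g x / z x \<and> z x < 0 \<and> D x > 0
        \<and> (D has_real_derivative D' x) (at x) \<and> \<bar>D' x\<bar> \<le> K \<and> \<bar>h x - c\<bar> \<le> M \<and> - g x \<ge> L * (\<alpha> - x) powr \<tau>"
      using Hl[OF x0(1)] D_pos x0 Dat[OF x0(3)] K M gx by auto
  qed
  have right: "(\<lambda>x. D x / z x) integrable_on {\<alpha>..\<alpha>+\<epsilon>}"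
  proof (rule S3[where z'=z' and h=h and c=c and g=g and D'=D' and L=L and \<tau>=\<tau> and M=M and K=K])
    show "0 < \<epsilon>" "\<epsilon> \<le> 1" "0 < L" "0 < \<tau>" "\<tau> < 1" "0 \<le> M" "0 \<le> K" using eps hol M K by auto
    show "D \<alpha> = 0" by (rule D_alpha)
  next
    fix x assume x: "x \<in> {\<alpha>..\<alpha>+\<epsilon>}"
    then have "x \<in> {0<..<1}" "x \<in> {0..1}" using eps \<alpha> by auto
    then show "(D has_real_derivative D' x) (at x) \<and> \<bar>D' x\<bar> \<le> K" using Dat K by auto
  next
    fix x assume x: "x \<in> {\<alpha><..\<alpha>+\<epsilon>}"
    then have x0: "x \<in> {\<alpha><..<1}" "x \<in> {0..1}" "x \<in> {0<..<1}" using eps \<alpha> by auto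
    have "\<bar>x - \<gamma>\<bar> < \<delta>h" using x eps eq by auto
    then have "\<bar>g x\<bar> \<ge> L * \<bar>x - \<gamma>\<bar> powr \<tau>" using hol(5) x0 by blast
    moreover have "g x > 0" using g_pos x0 eq by auto
    moreover have "\<bar>x - \<gamma>\<bar> = x - \<alpha>" using x eq by auto
    ultimately have gx: "g x \<ge> L * (x - \<alpha>) powr \<tau>" by simp
    show "(z has_real_derivative z' x) (at x) \<and> z' x = h x - c - D x * g x / z x \<and> z x > 0 \<and> D x < 0
        \<and> \<bar>h x - c\<bar> \<le> M \<and> g x \<ge> L * (x - \<alpha>) powr \<tau>"
      using Hr[OF x0(1)] D_neg x0 M gx by auto
  qed
  show ?thesis by (rule local_combine[OF eps(1) left eps(1) right])
qed

lemma sing_gamma: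
  fixes z z' :: "real \<Rightarrow> real"
  assumes lt: "\<alpha> < \<gamma>" and hb: "holder_below g \<gamma>" and zc: "continuous_on {0..1} z" and zg: "z \<gamma> = 0"
    and H: "\<And>u. u \<in> {\<alpha><..<1} - {\<gamma>} \<Longrightarrow> (z has_real_derivative z' u) (at u)
       \<and> z' u = h u - c - D u * g u / z u \<and> z u > 0"
  shows "\<exists>\<delta>>0. (\<lambda>u. D u / z u) integrable_on {\<gamma>-\<delta>..\<gamma>+\<delta>}"
proof -
  obtain L \<tau> \<delta>h where hol: "L > 0" "0 < \<tau>" "\<tau> < 1" "\<delta>h > 0"
    "\<And>u. u \<in> {0..1} \<Longrightarrow> \<bar>u - \<gamma>\<bar> < \<delta>h \<Longrightarrow> \<bar>g u\<bar> \<ge> L * \<bar>u - \<gamma>\<bar> powr \<tau>"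
    using holder_get[OF hb] by blast
  obtain M where M: "M > 0" "\<forall>u\<in>{0..1}. \<bar>h u - c\<bar> \<le> M" using M_ex by blast
  obtain Dm where Dm: "Dm > 0" "\<forall>u\<in>{0..1}. \<bar>D u\<bar> \<le> Dm" using Dm_ex by blast
  have Dg: "D \<gamma> < 0" using D_neg lt \<gamma> by auto
  obtain ed where ed: "ed > 0" "\<forall>x. \<bar>x - \<gamma>\<bar> < ed \<longrightarrow> D x < D \<gamma> / 2"
    using local_less[OF D_isCont[of \<gamma>], of "D \<gamma> / 2"] Dg \<gamma> by auto
  define d0 where "d0 = - D \<gamma> / 2"
  have d0: "d0 > 0" using Dg unfolding d0_def by simp
  define \<epsilon> where "\<epsilon> = min (1/2) (min ((\<gamma>-\<alpha>)/2) (min ((1-\<gamma>)/2) (min (\<delta>h/2) (ed/2))))"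
  have e1: "\<epsilon> \<le> 1/2" "\<epsilon> \<le> (\<gamma>-\<alpha>)/2" "\<epsilon> \<le> (1-\<gamma>)/2" "\<epsilon> \<le> \<delta>h/2" "\<epsilon> \<le> ed/2" unfolding \<epsilon>_def
    by (meson min.cobounded1 min.cobounded2 order_trans)+
  have e0: "\<epsilon> > 0" unfolding \<epsilon>_def using lt \<gamma> hol ed by auto
  have h2: "(\<gamma>-\<alpha>)/2 < \<gamma>-\<alpha>" "(1-\<gamma>)/2 < 1-\<gamma>" "\<delta>h/2 < \<delta>h" "ed/2 < ed" using lt \<gamma> hol ed by auto
  have eps: "0 < \<epsilon>" "\<epsilon> \<le> 1" "\<epsilon> < \<gamma> - \<alpha>" "\<epsilon> < 1 - \<gamma>" "\<epsilon> < \<delta>h" "\<epsilon> < ed"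
    using e0 e1 h2 by linarith+
  have sub1: "{\<gamma>-\<epsilon>..\<gamma>} \<subseteq> {0..1}" "{\<gamma>..\<gamma>+\<epsilon>} \<subseteq> {0..1}" using eps \<alpha> lt \<gamma> by auto
  have Dx: "D x \<le> - d0" if "\<bar>x - \<gamma>\<bar> < ed" for x using ed that unfolding d0_def by force
  have left: "(\<lambda>x. D x / z x) integrable_on {\<gamma>-\<epsilon>..\<gamma>}"
  proof (rule S4[where z'=z' and h=h and c=c and g=g and L=L and \<tau>=\<tau> and M=M and ?d0.0=d0 and Dm=Dm])
    show "0 < \<epsilon>" "\<epsilon> \<le> 1" "0 < L" "0 < \<tau>" "\<tau> < 1" "0 \<le> M" "0 < d0" "0 \<le> Dm" using eps hol M d0 Dm by auto
    show "continuous_on {\<gamma>-\<epsilon>..\<gamma>} z" "continuous_on {\<gamma>-\<epsilon>..\<gamma>} D"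
      using continuous_on_subset[OF zc sub1(1)] continuous_on_subset[OF Dc sub1(1)] by auto
    show "z \<gamma> = 0" by (rule zg)
    fix x assume x: "x \<in> {\<gamma>-\<epsilon>..<\<gamma>}"
    then have x0: "x \<in> {\<alpha><..<1} - {\<gamma>}" "x \<in> {0..1}" "x < \<gamma>" "0 < x" using eps \<alpha> lt by auto
    have "\<bar>x - \<gamma>\<bar> < \<delta>h" using x eps by auto
    then have "\<bar>g x\<bar> \<ge> L * \<bar>x - \<gamma>\<bar> powr \<tau>" using hol(5) x0 by blast
    moreover have "g x < 0" using g_neg x0 by auto
    moreover have "\<bar>x - \<gamma>\<bar> = \<gamma> - x" using x by auto
    ultimately have gx: "- g x \<ge> L * (\<gamma> - x) powr \<tau>" by simp
    have "\<bar>x - \<gamma>\<bar> < ed" using x eps by auto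
    then have "D x \<le> - d0" by (rule Dx)
    then show "(z has_real_derivative z' x) (at x) \<and> z' x = h x - c - D x * g x / z x \<and> z x > 0 \<and> D x \<le> - d0
        \<and> \<bar>D x\<bar> \<le> Dm \<and> \<bar>h x - c\<bar> \<le> M \<and> - g x \<ge> L * (\<gamma> - x) powr \<tau>"
      using H[OF x0(1)] x0 M Dm gx by auto
  qed
  have right: "(\<lambda>x. D x / z x) integrable_on {\<gamma>..\<gamma>+\<epsilon>}"
  proof (rule S5[where z'=z' and h=h and c=c and g=g and L=L and \<tau>=\<tau> and M=M and ?d0.0=d0 and Dm=Dm])
    show "0 < \<epsilon>" "\<epsilon> \<le> 1" "0 < L" "0 < \<tau>" "\<tau> < 1" "0 \<le> M" "0 < d0" "0 \<le> Dm" using eps hol M d0 Dm by auto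
    show "continuous_on {\<gamma>..\<gamma>+\<epsilon>} z" "continuous_on {\<gamma>..\<gamma>+\<epsilon>} D"
      using continuous_on_subset[OF zc sub1(2)] continuous_on_subset[OF Dc sub1(2)] by auto
    show "z \<gamma> = 0" by (rule zg)
    fix x assume x: "x \<in> {\<gamma><..\<gamma>+\<epsilon>}"
    then have x0: "x \<in> {\<alpha><..<1} - {\<gamma>}" "x \<in> {0..1}" "\<gamma> < x" "x < 1" using eps \<alpha> lt by auto
    have "\<bar>x - \<gamma>\<bar> < \<delta>h" using x eps by auto
    then have "\<bar>g x\<bar> \<ge> L * \<bar>x - \<gamma>\<bar> powr \<tau>" using hol(5) x0 by blast
    moreover have "g x > 0" using g_pos x0 by auto
    moreover have "\<bar>x - \<gamma>\<bar> = x - \<gamma>" using x by auto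
    ultimately have gx: "g x \<ge> L * (x - \<gamma>) powr \<tau>" by simp
    have "\<bar>x - \<gamma>\<bar> < ed" using x eps by auto
    then have "D x \<le> - d0" by (rule Dx)
    then show "(z has_real_derivative z' x) (at x) \<and> z' x = h x - c - D x * g x / z x \<and> z x > 0 \<and> D x \<le> - d0
        \<and> \<bar>D x\<bar> \<le> Dm \<and> \<bar>h x - c\<bar> \<le> M \<and> g x \<ge> L * (x - \<gamma>) powr \<tau>"
      using H[OF x0(1)] x0 M Dm gx by auto
  qed
  show ?thesis by (rule local_combine[OF eps(1) left eps(1) right])
qed

end

context prop_setting begin

lemma signs_A:
  fixes z :: "real \<Rightarrow> real"
  assumes zneg: "\<forall>u. 0 < u \<and> u < \<alpha> \<longrightarrow> z u < 0"
   and zpos: "\<forall>u. \<alpha> < u \<and> u < 1 \<and> u \<noteq> \<gamma> \<longrightarrow> z u > 0"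
   and u: "u \<in> {0<..<1} - {\<alpha>, \<gamma>}"
  shows "z u \<noteq> 0 \<and> D u / z u \<le> 0"
proof (cases "u < \<alpha>")
  case True
  then have "D u > 0" "z u < 0" using D_pos zneg u by auto
  then show ?thesis by (simp add: divide_pos_neg less_imp_le)
next
  case False
  then have "\<alpha> < u" using u by auto
  then have "D u < 0" "z u > 0" using D_neg zpos u by auto
  then show ?thesis by (simp add: divide_neg_pos less_imp_le)
qed

end

theorem proposition3p2:
  fixes f h D g :: "real \<Rightarrow> real" and \<alpha> \<gamma> c :: real
  assumes f_C1: "\<forall>u\<in>{0..1}. (f has_real_derivative h u) (at u within {0..1})"
      and h_cont: "continuous_on {0..1} h"
      and f0: "f 0 = 0"
      and D_C1: "\<exists>D'. (\<forall>u\<in>{0..1}. (D has_real_derivative D' u) (at u within {0..1}))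
                      \<and> continuous_on {0..1} D'"
      and \<alpha>: "0 < \<alpha>" "\<alpha> < 1"
      and D_pos: "\<forall>u. 0 < u \<and> u < \<alpha> \<longrightarrow> D u > 0"
      and D_neg: "\<forall>u. \<alpha> < u \<and> u < 1 \<longrightarrow> D u < 0"
      and g_cont: "continuous_on {0..1} g"
      and \<gamma>: "0 < \<gamma>" "\<gamma> < 1"
      and g_neg: "\<forall>u. 0 < u \<and> u < \<gamma> \<longrightarrow> g u < 0"
      and g_pos: "\<forall>u. \<gamma> < u \<and> u < 1 \<longrightarrow> g u > 0"
      and g_zeros: "g 0 = 0" "g \<gamma> = 0" "g 1 = 0"
      and hyp:
        "(\<exists>z z'. continuous_on {0..1} z
              \<and> (\<forall>u\<in>{0<..<1} - {\<alpha>}. (z has_real_derivative z' u) (at u))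
              \<and> continuous_on ({0<..<1} - {\<alpha>}) z'
              \<and> (\<forall>u\<in>{0<..<1} - {\<alpha>}. z' u = h u - c - D u * g u / z u)
              \<and> (\<forall>u. 0 < u \<and> u < \<alpha> \<longrightarrow> z u < 0)
              \<and> (\<forall>u. \<alpha> < u \<and> u < 1 \<longrightarrow> z u > 0)
              \<and> z 0 = 0 \<and> z \<alpha> = 0 \<and> z 1 = 0
              \<and> (\<alpha> \<noteq> \<gamma> \<or> (\<alpha> = \<gamma> \<and> holder_below g \<gamma>)))
         \<or> (\<alpha> < \<gamma> \<and> holder_below g \<gamma> \<and>
            (\<exists>z z'. continuous_on {0..1} z
              \<and> (\<forall>u\<in>{0<..<1} - {\<alpha>, \<gamma>}. (z has_real_derivative z' u) (at u))
              \<and> continuous_on ({0<..<1} - {\<alpha>, \<gamma>}) z'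
              \<and> (\<forall>u\<in>{0<..<1} - {\<alpha>, \<gamma>}. z' u = h u - c - D u * g u / z u)
              \<and> (\<forall>u. 0 < u \<and> u < \<alpha> \<longrightarrow> z u < 0)
              \<and> (\<forall>u. \<alpha> < u \<and> u < 1 \<and> u \<noteq> \<gamma> \<longrightarrow> z u > 0)
              \<and> z 0 = 0 \<and> z \<alpha> = 0 \<and> z 1 = 0 \<and> z \<gamma> = 0))"
  shows "\<exists>\<phi>. wavefront D f g c \<phi> \<and> (\<phi> \<longlongrightarrow> 1) at_bot \<and> (\<phi> \<longlongrightarrow> 0) at_top"
proof -
  interpret P: prop_setting f h D g \<alpha> \<gamma> c
    using f_C1 h_cont D_C1 \<alpha> D_pos D_neg g_cont \<gamma> g_neg g_pos g_zeros by unfold_locales auto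
  from hyp show ?thesis
  proof (elim disjE exE conjE)
    fix z z' :: "real \<Rightarrow> real"
    assume zc: "continuous_on {0..1} z"
      and zd: "\<forall>u\<in>{0<..<1} - {\<alpha>}. (z has_real_derivative z' u) (at u)"
      and "continuous_on ({0<..<1} - {\<alpha>}) z'"
      and ode: "\<forall>u\<in>{0<..<1} - {\<alpha>}. z' u = h u - c - D u * g u / z u"
      and zneg: "\<forall>u. 0 < u \<and> u < \<alpha> \<longrightarrow> z u < 0"
      and zpos: "\<forall>u. \<alpha> < u \<and> u < 1 \<longrightarrow> z u > 0"
      and z0: "z 0 = 0" "z \<alpha> = 0" "z 1 = 0"
    have zpos': "\<forall>u. \<alpha> < u \<and> u < 1 \<and> u \<noteq> \<gamma> \<longrightarrow> z u > 0" using zpos by auto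
    {
      assume ne: "\<alpha> \<noteq> \<gamma>"
      have sing: "\<exists>\<delta>>0. (\<lambda>u. D u / z u) integrable_on {\<alpha>-\<delta>..\<alpha>+\<delta>}"
      proof (rule P.sing_alpha[OF ne zc])
        fix u assume u: "u \<in> {0<..<1} - {\<alpha>, \<gamma>}"
        then have "u \<in> {0<..<1} - {\<alpha>}" by auto
        then show "(z has_real_derivative z' u) (at u) \<and> z' u = h u - c - D u * g u / z u \<and> z u \<noteq> 0 \<and> D u / z u \<le> 0"
          using zd ode P.signs_A[OF zneg zpos' u] by auto
      qed
      show ?thesis by (rule P.caseA[OF zc zd ode zneg zpos z0 sing])
    }
    {
      assume eq: "\<alpha> = \<gamma>" and hb: "holder_below g \<gamma>"
      have sing: "\<exists>\<delta>>0. (\<lambda>u. D u / z u) integrable_on {\<alpha>-\<delta>..\<alpha>+\<delta>}"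
      proof (rule P.sing_eq[OF eq hb zc])
        fix u assume u: "u \<in> {0<..<\<alpha>}"
        then have "u \<in> {0<..<1} - {\<alpha>}" using \<alpha> by auto
        then show "(z has_real_derivative z' u) (at u) \<and> z' u = h u - c - D u * g u / z u \<and> z u < 0"
          using zd ode zneg u by auto
      next
        fix u assume u: "u \<in> {\<alpha><..<1}"
        then have "u \<in> {0<..<1} - {\<alpha>}" using \<alpha> by auto
        then show "(z has_real_derivative z' u) (at u) \<and> z' u = h u - c - D u * g u / z u \<and> z u > 0"
          using zd ode zpos u by auto
      qed
      show ?thesis by (rule P.caseA[OF zc zd ode zneg zpos z0 sing])
    }
  next
    fix z z' :: "real \<Rightarrow> real"
    assume lt: "\<alpha> < \<gamma>" and hb: "holder_below g \<gamma>"
      and zc: "continuous_on {0..1} z"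
      and zd: "\<forall>u\<in>{0<..<1} - {\<alpha>, \<gamma>}. (z has_real_derivative z' u) (at u)"
      and "continuous_on ({0<..<1} - {\<alpha>, \<gamma>}) z'"
      and ode: "\<forall>u\<in>{0<..<1} - {\<alpha>, \<gamma>}. z' u = h u - c - D u * g u / z u"
      and zneg: "\<forall>u. 0 < u \<and> u < \<alpha> \<longrightarrow> z u < 0"
      and zpos: "\<forall>u. \<alpha> < u \<and> u < 1 \<and> u \<noteq> \<gamma> \<longrightarrow> z u > 0"
      and z0: "z 0 = 0" "z \<alpha> = 0" "z 1 = 0" "z \<gamma> = 0"
    have ne: "\<alpha> \<noteq> \<gamma>" using lt by simp
    have sing: "\<exists>\<delta>>0. (\<lambda>u. D u / z u) integrable_on {e-\<delta>..e+\<delta>}" if e: "e \<in> {\<alpha>, \<gamma>}" for e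
    proof -
      have sa: "\<exists>\<delta>>0. (\<lambda>u. D u / z u) integrable_on {\<alpha>-\<delta>..\<alpha>+\<delta>}"
      proof (rule P.sing_alpha[OF ne zc])
        fix u assume u: "u \<in> {0<..<1} - {\<alpha>, \<gamma>}"
        then show "(z has_real_derivative z' u) (at u) \<and> z' u = h u - c - D u * g u / z u \<and> z u \<noteq> 0 \<and> D u / z u \<le> 0"
          using zd ode P.signs_A[OF zneg zpos u] by auto
      qed
      have sg: "\<exists>\<delta>>0. (\<lambda>u. D u / z u) integrable_on {\<gamma>-\<delta>..\<gamma>+\<delta>}"
      proof (rule P.sing_gamma[OF lt hb zc z0(4)])
        fix u assume u: "u \<in> {\<alpha><..<1} - {\<gamma>}"
        then have "u \<in> {0<..<1} - {\<alpha>, \<gamma>}" using \<alpha> by auto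
        then show "(z has_real_derivative z' u) (at u) \<and> z' u = h u - c - D u * g u / z u \<and> z u > 0"
          using zd ode zpos u by auto
      qed
      show ?thesis using e sa sg by auto
    qed
    show ?thesis by (rule P.caseB[OF lt zc zd ode zneg zpos z0 sing])
  qed
qed

end
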